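(* Let $q$ be a fixed prime power and $0\le k\le n$. Given $\mathrm{EXT}(X)$ for $X\in\mathcal{G}_q(n,k)$, the lexicographic index \[\mathrm{I}_{\mathrm{EXT}}(X)=\sum_{j=1}^{n}\Bigl(v_j\,q^{k-w_{j-1}}+(1-v_j)\frac{\{X_j\}}{q^{w_{j-1}}}\Bigr)\left[\begin{smallmatrix} n-j\\ k-w_{j-1}\end{smallmatrix}\right]_q\] can be computed with $O(nk(n-k)\log n\log\log n)$ operations on $q$-ary digits.
   Context: $\mathcal{G}_q(n,k)$ is the set of $k$-dimensional subspaces of $\mathbb{F}_q^n$, with field elements identified with $\mathbb{Z}_q=\{0,\dots,q-1\}$. $\left[\begin{smallmatrix} n\\ k\end{smallmatrix}\right]_q=\prod_{i=0}^{k-1}\frac{q^{n-i}-1}{q^{k-i}-1}$ (equal to $1$ for $k=0$ and $0$ if $k>n$ or $k<0$). For $X\in\mathcal{G}_q(n,k)$: $\mathrm{RE}(X)$ is the unique $k\times n$ reduced row echelon matrix whose rows span $X$, columns $X_n,\dots,X_1$ left to right; $v(X)=(v_n,\dots,v_1)$ is binary with $v_i=1$ iff column $X_i$ contains a row's leading one; $\mathrm{EXT}(X)$ is $v(X)$ placed as a top row above $\mathrm{RE}(X)$. $w_j=\sum_{\ell\le j}v_\ell$, $w_0=0$. For a $q$-ary vector $y=(y_1,\dots,y_r)$, $\{y\}=\sum_t y_tq^{r-t}$. All integers are handled in base $q$; the cost model counts digit operations, with multiplication of $q$-ary integers of lengths $a>b$ costing $O(a\log b\log\log b)$ digit operations,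 and multiplication/division by $q^i$ being a shift. *)

theory Defs
  imports Complex_Main "HOL-Library.Log_Nat"
begin

definition gbinom :: "nat \<Rightarrow> nat \<Rightarrow> nat \<Rightarrow> nat" where
  "gbinom q n k = (if k > n then 0 else
     nat \<lfloor>\<Prod>i<k. (real q ^ (n - i) - 1) / (real q ^ (k - i) - 1)\<rfloor>)"

text \<open>A vector of F^n is a function x with x i the coordinate of column X_i (1 \<le> i \<le> n);
  columns are displayed X_n, ..., X_1 from left to right.\<close>

definition vecs :: "nat \<Rightarrow> (nat \<Rightarrow> 'a::zero) set" where
  "vecs n = {x. \<forall>i. (i = 0 \<or> n < i) \<longrightarrow> x i = 0}"

definition lincomb :: "nat \<Rightarrow> (nat \<Rightarrow> nat \<Rightarrow> 'a::field) \<Rightarrow> (nat \<Rightarrow> 'a) \<Rightarrow> (nat \<Rightarrow> 'a)" where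
  "lincomb k B c = (\<lambda>i. \<Sum>t=1..k. c t * B t i)"

definition span_rows :: "nat \<Rightarrow> (nat \<Rightarrow> nat \<Rightarrow> 'a::field) \<Rightarrow> (nat \<Rightarrow> 'a) set" where
  "span_rows k B = range (lincomb k B)"

definition lin_indep :: "nat \<Rightarrow> (nat \<Rightarrow> nat \<Rightarrow> 'a::field) \<Rightarrow> bool" where
  "lin_indep k B = (\<forall>c. lincomb k B c = (\<lambda>_. 0) \<longrightarrow> (\<forall>t\<in>{1..k}. c t = 0))"

definition grass :: "nat \<Rightarrow> nat \<Rightarrow> (nat \<Rightarrow> 'a::{finite,field}) set set" where
  "grass n k = {span_rows k B | B. (\<forall>t\<in>{1..k}. B t \<in> vecs n) \<and> lin_indep k B}"

text \<open>Column index (i.e. i of X_i) of the leading (leftmost nonzero) entry of row t.\<close>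
definition lead :: "(nat \<Rightarrow> nat \<Rightarrow> 'a::zero) \<Rightarrow> nat \<Rightarrow> nat" where
  "lead M t = (GREATEST i. M t i \<noteq> 0)"

text \<open>M t i is the entry in row t (1..k, top to bottom) and column X_i (1..n).\<close>
definition is_rref :: "nat \<Rightarrow> nat \<Rightarrow> (nat \<Rightarrow> nat \<Rightarrow> 'a::field) \<Rightarrow> bool" where
  "is_rref n k M =
    ((\<forall>t i. (t \<notin> {1..k} \<or> i \<notin> {1..n}) \<longrightarrow> M t i = 0) \<and>
     (\<forall>t\<in>{1..k}. \<exists>i. M t i \<noteq> 0) \<and>
     (\<forall>t\<in>{1..k}. M t (lead M t) = 1) \<and>
     (\<forall>t\<in>{1..k}. \<forall>t'\<in>{1..k}. t < t' \<longrightarrow> lead M t' < lead M t) \<and>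
     (\<forall>t\<in>{1..k}. \<forall>t'\<in>{1..k}. t' \<noteq> t \<longrightarrow> M t' (lead M t) = 0))"

definition RE :: "nat \<Rightarrow> nat \<Rightarrow> (nat \<Rightarrow> 'a::{finite,field}) set \<Rightarrow> (nat \<Rightarrow> nat \<Rightarrow> 'a)" where
  "RE n k X = (THE M. is_rref n k M \<and> span_rows k M = X)"

definition vv :: "nat \<Rightarrow> nat \<Rightarrow> (nat \<Rightarrow> 'a::{finite,field}) set \<Rightarrow> nat \<Rightarrow> nat" where
  "vv n k X i = (if 1 \<le> i \<and> i \<le> n \<and> (\<exists>t\<in>{1..k}. lead (RE n k X) t = i) then 1 else 0)"

definition ww :: "nat \<Rightarrow> nat \<Rightarrow> (nat \<Rightarrow> 'a::{finite,field}) set \<Rightarrow> nat \<Rightarrow> nat" where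
  "ww n k X j = (\<Sum>l=1..j. vv n k X l)"

text \<open>{X_j}: the column X_j read top to bottom as a q-ary number, with the field
  identified with {0..q-1} via \<phi>.\<close>
definition colval :: "('a::{finite,field} \<Rightarrow> nat) \<Rightarrow> nat \<Rightarrow> nat \<Rightarrow> (nat \<Rightarrow> 'a) set \<Rightarrow> nat \<Rightarrow> nat" where
  "colval \<phi> n k X j = (\<Sum>t=1..k. \<phi> (RE n k X t j) * card (UNIV :: 'a set) ^ (k - t))"

text \<open>EXT(X) as a matrix of q-ary digits: row 0 is v(X), rows 1..k are RE(X);
  column position p = 1..n from left to right, i.e. column X_(n+1-p).\<close>
definition EXT :: "('a::{finite,field} \<Rightarrow> nat) \<Rightarrow> nat \<Rightarrow> nat \<Rightarrow> (nat \<Rightarrow> 'a) set \<Rightarrow> nat \<Rightarrow> nat \<Rightarrow> nat" where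
  "EXT \<phi> n k X r p =
     (if 1 \<le> p \<and> p \<le> n \<and> r \<le> k then
        (if r = 0 then vv n k X (n + 1 - p) else \<phi> (RE n k X r (n + 1 - p)))
      else 0)"

definition I_EXT :: "('a::{finite,field} \<Rightarrow> nat) \<Rightarrow> nat \<Rightarrow> nat \<Rightarrow> (nat \<Rightarrow> 'a) set \<Rightarrow> nat" where
  "I_EXT \<phi> n k X = (\<Sum>j=1..n.
     (vv n k X j * card (UNIV :: 'a set) ^ (k - ww n k X (j - 1))
      + (1 - vv n k X j) * (colval \<phi> n k X j div card (UNIV :: 'a set) ^ ww n k X (j - 1)))
     * gbinom (card (UNIV :: 'a set)) (n - j) (k - ww n k X (j - 1)))"

definition qlen :: "nat \<Rightarrow> nat \<Rightarrow> nat" where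
  "qlen q x = max 1 (floorlog q x)"

definition lg :: "nat \<Rightarrow> nat" where
  "lg x = max 1 (floorlog 2 x)"

definition mcost :: "nat \<Rightarrow> nat \<Rightarrow> nat \<Rightarrow> nat" where
  "mcost q x y = (let a = max (qlen q x) (qlen q y); b = min (qlen q x) (qlen q y)
                  in a * lg b * lg (lg b))"

datatype aexp =
    Cnst nat
  | Reg nat
  | Plus nat nat | Minus nat nat   \<comment> \<open>(truncated) subtraction\<close>
  | Times nat nat | Quot nat nat | Rem nat nat
  | ShL nat nat
  | ShR nat nat
  | Inp nat nat

datatype com =
    Skip
  | Assign nat aexp
  | Seq com com
  | If nat nat com com
  | While nat nat com

fun aval :: "nat \<Rightarrow> (nat \<Rightarrow> nat \<Rightarrow> nat) \<Rightarrow> aexp \<Rightarrow> (nat \<Rightarrow> nat) \<Rightarrow> nat" where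
  "aval q inp (Cnst c) s = c"
| "aval q inp (Reg a) s = s a"
| "aval q inp (Plus a b) s = s a + s b"
| "aval q inp (Minus a b) s = s a - s b"
| "aval q inp (Times a b) s = s a * s b"
| "aval q inp (Quot a b) s = s a div s b"
| "aval q inp (Rem a b) s = s a mod s b"
| "aval q inp (ShL a b) s = s a * q ^ s b"
| "aval q inp (ShR a b) s = s a div q ^ s b"
| "aval q inp (Inp a b) s = inp (s a) (s b)"

fun acost :: "nat \<Rightarrow> aexp \<Rightarrow> (nat \<Rightarrow> nat) \<Rightarrow> nat" where
  "acost q (Cnst c) s = qlen q c"
| "acost q (Reg a) s = qlen q (s a)"
| "acost q (Plus a b) s = max (qlen q (s a)) (qlen q (s b)) + 1"
| "acost q (Minus a b) s = max (qlen q (s a)) (qlen q (s b)) + 1"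
| "acost q (Times a b) s = mcost q (s a) (s b)"
| "acost q (Quot a b) s = mcost q (s a) (s b)"
| "acost q (Rem a b) s = mcost q (s a) (s b)"
| "acost q (ShL a b) s = qlen q (s a) + s b + qlen q (s b)"
| "acost q (ShR a b) s = qlen q (s a) + qlen q (s b)"
| "acost q (Inp a b) s = qlen q (s a) + qlen q (s b) + 1"

definition cmpcost :: "nat \<Rightarrow> nat \<Rightarrow> nat \<Rightarrow> (nat \<Rightarrow> nat) \<Rightarrow> nat" where
  "cmpcost q a b s = max (qlen q (s a)) (qlen q (s b)) + 1"

inductive big :: "nat \<Rightarrow> (nat \<Rightarrow> nat \<Rightarrow> nat) \<Rightarrow> com \<Rightarrow> (nat \<Rightarrow> nat) \<Rightarrow> nat \<Rightarrow> (nat \<Rightarrow> nat) \<Rightarrow> bool"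
  for q inp where
  BSkip: "big q inp Skip s 1 s"
| BAssign: "big q inp (Assign x a) s (1 + acost q a s) (s(x := aval q inp a s))"
| BSeq: "big q inp c1 s t1 s1 \<Longrightarrow> big q inp c2 s1 t2 s2 \<Longrightarrow> big q inp (Seq c1 c2) s (t1 + t2) s2"
| BIfT: "s a < s b \<Longrightarrow> big q inp c1 s t s' \<Longrightarrow> big q inp (If a b c1 c2) s (cmpcost q a b s + t) s'"
| BIfF: "\<not> s a < s b \<Longrightarrow> big q inp c2 s t s' \<Longrightarrow> big q inp (If a b c1 c2) s (cmpcost q a b s + t) s'"
| BWhileF: "\<not> s a < s b \<Longrightarrow> big q inp (While a b c) s (cmpcost q a b s) s"
| BWhileT: "s a < s b \<Longrightarrow> big q inp c s t1 s1 \<Longrightarrow> big q inp (While a b c) s1 t2 s2 \<Longrightarrow>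
            big q inp (While a b c) s (cmpcost q a b s + t1 + t2) s2"

text \<open>Initial state: register 1 holds n, register 2 holds k, all others 0.
  The output is read from register 0.\<close>
definition init :: "nat \<Rightarrow> nat \<Rightarrow> nat \<Rightarrow> nat" where
  "init n k = (\<lambda>_. 0)(1 := n, 2 := k)"

end

theory Submission
  imports Defs
begin
fun gb :: "nat \<Rightarrow> nat \<Rightarrow> nat \<Rightarrow> nat" where
  "gb q m 0 = 1"
| "gb q 0 (Suc r) = 0"
| "gb q (Suc m) (Suc r) = gb q m r + q ^ Suc r * gb q m (Suc r)"

definition NN :: "nat \<Rightarrow> nat \<Rightarrow> nat \<Rightarrow> real" where
  "NN q m r = (\<Prod>i<r. real q ^ (m - i) - 1)"
definition FF :: "nat \<Rightarrow> nat \<Rightarrow> real" where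
  "FF q r = (\<Prod>i<r. real q ^ (i + 1) - 1)"

lemma rpow_gt1: "q \<ge> 2 \<Longrightarrow> 0 < e \<Longrightarrow> 1 < real q ^ e"
  by (rule one_less_power) auto

lemma FF_pos: "q \<ge> 2 \<Longrightarrow> FF q r > 0"
  unfolding FF_def
proof (rule prod_pos)
  fix i assume "q \<ge> 2"
  then show "0 < real q ^ (i + 1) - 1" using rpow_gt1[of q "i+1"] by auto
qed

lemma NN_Suc: "NN q m (Suc r) = NN q m r * (real q ^ (m - r) - 1)"
  by (simp add: NN_def)
lemma FF_Suc: "FF q (Suc r) = FF q r * (real q ^ Suc r - 1)"
  by (simp add: FF_def)
lemma NN_shift: "NN q (Suc m) (Suc r) = (real q ^ Suc m - 1) * NN q m r"
  unfolding NN_def by (subst prod.lessThan_Suc_shift) simp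
lemma NN_zero: "m < r \<Longrightarrow> NN q m r = 0"
  unfolding NN_def by (rule prod_zero) (auto intro: bexI[of _ m])
lemma NN_0 [simp]: "NN q m 0 = 1" by (simp add: NN_def)
lemma FF_0 [simp]: "FF q 0 = 1" by (simp add: FF_def)

lemma gb_real: "q \<ge> 2 \<Longrightarrow> real (gb q m r) = NN q m r / FF q r"
proof (induction q m r rule: gb.induct)
  case (1 q m) then show ?case by simp
next
  case (2 q r) then show ?case by (simp add: NN_zero)
next
  case (3 q m r)
  have F: "FF q r > 0" using FF_pos 3 by auto
  have d: "real q ^ Suc r - 1 > 0"
    using rpow_gt1[of q "Suc r"] 3 by auto
  show ?case
  proof (cases "r \<le> m")
    case True
    have e: "real q ^ Suc r * real q ^ (m - r) = real q ^ Suc m"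
    proof -
      have "Suc r + (m - r) = Suc m" using True by simp
      then show ?thesis by (metis power_add)
    qed
    have "real (gb q (Suc m) (Suc r)) = NN q m r / FF q r + real q ^ Suc r * (NN q m r * (real q ^ (m - r) - 1) / (FF q r * (real q ^ Suc r - 1)))"
      using 3 by (simp add: NN_Suc FF_Suc)
    also have "\<dots> = NN q m r * (real q ^ Suc r - 1 + (real q ^ Suc r * real q ^ (m - r) - real q ^ Suc r)) / (FF q r * (real q ^ Suc r - 1))"
      using F d by (simp add: field_simps)
    also have "\<dots> = NN q m r * (real q ^ Suc m - 1) / (FF q r * (real q ^ Suc r - 1))"
      unfolding e by (simp add: algebra_simps)
    also have "\<dots> = NN q (Suc m) (Suc r) / FF q (Suc r)"
      by (simp add: NN_shift FF_Suc mult.commute)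
    finally show ?thesis .
  next
    case False
    then show ?thesis using 3 by (simp add: NN_zero NN_shift)
  qed
qed

lemma gb_zero: "m < r \<Longrightarrow> gb q m r = 0"
  by (induction q m r rule: gb.induct) auto

lemma gbinom_gb: assumes "q \<ge> 2" shows "gbinom q m r = gb q m r"
proof (cases "r > m")
  case True then show ?thesis by (simp add: gbinom_def gb_zero)
next
  case False
  have "(\<Prod>i<r. (real q ^ (m - i) - 1) / (real q ^ (r - i) - 1)) = NN q m r / FF q r"
  proof -
    have "(\<Prod>i<r. (real q ^ (r - i) - 1)) = FF q r"
      unfolding FF_def
      by (rule trans[OF _ prod.nat_diff_reindex[of "\<lambda>i. real q ^ (i + 1) - 1" r]])
         (rule prod.cong, auto simp: Suc_diff_Suc)
    then show ?thesis by (simp add: prod_dividef NN_def)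
  qed
  moreover have "NN q m r / FF q r = real (gb q m r)" using gb_real[OF assms] by simp
  ultimately show ?thesis using False by (simp add: gbinom_def)
qed

lemma pow_ge1: "q \<ge> 2 \<Longrightarrow> (1::nat) \<le> q ^ x" by simp

lemma rdiff: "q \<ge> 2 \<Longrightarrow> real (q ^ e - 1) = real q ^ e - 1"
  by (simp add: of_nat_diff)

lemma gb_I1: assumes "q \<ge> 2"
  shows "gb q (Suc m) (Suc r) * (q ^ Suc r - 1) = gb q m r * (q ^ Suc m - 1)"
proof -
  have F: "FF q r > 0" using FF_pos assms by auto
  have d: "real q ^ Suc r - 1 > 0" using rpow_gt1[of q "Suc r"] assms by auto
  have "real (gb q (Suc m) (Suc r)) * (real q ^ Suc r - 1) = (real q ^ Suc m - 1) * NN q m r / (FF q r * (real q ^ Suc r - 1)) * (real q ^ Suc r - 1)"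
    by (simp only: gb_real[OF assms, of "Suc m" "Suc r"] NN_shift FF_Suc)
  also have "\<dots> = (real q ^ Suc m - 1) * (NN q m r / FF q r)" using d F by (simp add: field_simps)
  also have "\<dots> = real (gb q m r) * (real q ^ Suc m - 1)" using gb_real[OF assms] by simp
  finally have "real (gb q (Suc m) (Suc r)) * (real q ^ Suc r - 1) = real (gb q m r) * (real q ^ Suc m - 1)" .
  then have "real (gb q (Suc m) (Suc r) * (q ^ Suc r - 1)) = real (gb q m r * (q ^ Suc m - 1))"
    by (simp only: of_nat_mult rdiff[OF assms])
  then show ?thesis by (simp only: of_nat_eq_iff)
qed

lemma gb_I2: assumes "q \<ge> 2"
  shows "gb q m r * (q ^ Suc m - 1) = gb q (Suc m) r * (q ^ (Suc m - r) - 1)"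
proof (cases r)
  case 0 then show ?thesis by simp
next
  case (Suc r')
  have F: "FF q r > 0" using FF_pos assms by auto
  have e: "Suc m - r = m - r'" using Suc by simp
  have "real (gb q m r) * (real q ^ Suc m - 1) = NN q m r' * (real q ^ (m - r') - 1) * (real q ^ Suc m - 1) / FF q r"
    using gb_real[OF assms] Suc by (simp add: NN_Suc)
  also have "\<dots> = (real q ^ Suc m - 1) * NN q m r' * (real q ^ (Suc m - r) - 1) / FF q r"
    using e by (simp add: ac_simps)
  also have "\<dots> = real (gb q (Suc m) r) * (real q ^ (Suc m - r) - 1)"
    using gb_real[OF assms, of "Suc m" r] Suc by (simp add: NN_shift del: gb.simps)
  finally have "real (gb q m r) * (real q ^ Suc m - 1) = real (gb q (Suc m) r) * (real q ^ (Suc m - r) - 1)" .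
  then have "real (gb q m r * (q ^ Suc m - 1)) = real (gb q (Suc m) r * (q ^ (Suc m - r) - 1))"
    by (simp only: of_nat_mult rdiff[OF assms])
  then show ?thesis by (simp only: of_nat_eq_iff)
qed

lemma gb_bound: assumes "q \<ge> 2" shows "r \<le> m \<Longrightarrow> gb q m r \<le> q ^ (r * (m - r + 1))"
proof (induction r arbitrary: m)
  case 0 then show ?case by simp
next
  case (Suc r)
  then obtain m' where m: "m = Suc m'" by (cases m) auto
  have rm: "r \<le> m'" using Suc m by auto
  have p1: "q ^ Suc r - 1 > 0" using assms one_less_power[of q "Suc r"] by simp
  have "q ^ Suc m' - 1 \<le> q ^ (m' - r + 1) * (q ^ Suc r - 1)"
  proof -
    have "m' - r + 1 + Suc r = m' + 2" using rm by simp
    then have A: "q ^ (m' - r + 1) * q ^ Suc r = q ^ (m' + 2)" by (metis power_add)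
    have B: "q ^ (m' - r + 1) \<le> q ^ (m' + 1)" using assms by (intro power_increasing) auto
    have C: "q ^ (m'+1) * 2 \<le> q ^ (m' + 2)" using assms by simp
    have D: "q ^ (m' - r + 1) * (q ^ Suc r - 1) = q ^ (m' + 2) - q ^ (m' - r + 1)"
      by (simp only: diff_mult_distrib2 mult_1_right A)
    have E: "q ^ Suc m' = q ^ (m'+1)" by simp
    show ?thesis using D B C E by linarith
  qed
  have "gb q m (Suc r) * (q ^ Suc r - 1) = gb q m' r * (q ^ Suc m' - 1)"
    using gb_I1[OF assms] m by simp
  also have "\<dots> \<le> q ^ (r * (m' - r + 1)) * (q ^ (m' - r + 1) * (q ^ Suc r - 1))"
    using Suc.IH[OF rm] \<open>q ^ Suc m' - 1 \<le> _\<close> by (intro mult_le_mono) auto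
  also have "\<dots> = q ^ (Suc r * (m - Suc r + 1)) * (q ^ Suc r - 1)"
  proof -
    have "Suc r * (m - Suc r + 1) = r * (m' - r + 1) + (m' - r + 1)" using m rm by simp
    then show ?thesis by (simp only: power_add mult.assoc)
  qed
  finally show ?case using p1 by simp
qed

definition runs :: "nat \<Rightarrow> (nat \<Rightarrow> nat \<Rightarrow> nat) \<Rightarrow> com \<Rightarrow> (nat \<Rightarrow> nat) \<Rightarrow> (nat \<Rightarrow> nat) \<Rightarrow> nat \<Rightarrow> bool" where
  "runs q inp c s s' b = (\<exists>t. big q inp c s t s' \<and> t \<le> b)"

lemma runs_mono: "runs q inp c s s' b \<Longrightarrow> b \<le> b' \<Longrightarrow> runs q inp c s s' b'"
  unfolding runs_def by auto

lemma runs_skip: "runs q inp Skip s s 1"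
  unfolding runs_def by (auto intro: big.intros)

lemma runs_assign: "acost q a s \<le> K \<Longrightarrow> runs q inp (Assign x a) s (s(x := aval q inp a s)) (Suc K)"
  unfolding runs_def by (auto intro!: exI big.intros)

lemma runs_assign': "acost q a s \<le> K \<Longrightarrow> s' = s(x := aval q inp a s) \<Longrightarrow> runs q inp (Assign x a) s s' (Suc K)"
  using runs_assign by blast

lemma runs_seq: "runs q inp c1 s s1 b1 \<Longrightarrow> runs q inp c2 s1 s2 b2 \<Longrightarrow> runs q inp (Seq c1 c2) s s2 (b1 + b2)"
  unfolding runs_def by (meson big.intros(3) add_mono)

lemma runs_seq_assign: "acost q a s \<le> K \<Longrightarrow> runs q inp c2 (s(x := aval q inp a s)) s2 b2 \<Longrightarrow>
   runs q inp (Seq (Assign x a) c2) s s2 (Suc K + b2)"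
  by (rule runs_seq[OF runs_assign])

lemma runs_ifT: "s a < s b \<Longrightarrow> cmpcost q a b s \<le> K \<Longrightarrow> runs q inp c1 s s' b1 \<Longrightarrow> runs q inp (If a b c1 c2) s s' (K + b1)"
  unfolding runs_def by (meson big.intros(4) add_mono)

lemma runs_ifF: "\<not> s a < s b \<Longrightarrow> cmpcost q a b s \<le> K \<Longrightarrow> runs q inp c2 s s' b1 \<Longrightarrow> runs q inp (If a b c1 c2) s s' (K + b1)"
  unfolding runs_def by (meson big.intros(5) add_mono)

lemma runs_whileF: "\<not> s a < s b \<Longrightarrow> cmpcost q a b s \<le> K \<Longrightarrow> runs q inp (While a b c) s s K"
  unfolding runs_def by (auto intro!: exI big.intros(6))

lemma runs_whileT: "s a < s b \<Longrightarrow> cmpcost q a b s \<le> K \<Longrightarrow> runs q inp c s s1 b1 \<Longrightarrow>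
   runs q inp (While a b c) s1 s2 b2 \<Longrightarrow> runs q inp (While a b c) s s2 (K + b1 + b2)"
  unfolding runs_def by (meson big.intros(7) add_mono)

lemma runs_big: "runs q inp c s s' b \<Longrightarrow> \<exists>t. big q inp c s t s' \<and> t \<le> b"
  unfolding runs_def by auto

lemma qlen_le: "q \<ge> 2 \<Longrightarrow> x < q ^ e \<Longrightarrow> 1 \<le> e \<Longrightarrow> qlen q x \<le> e"
  unfolding qlen_def by (auto intro: floorlog_leI)

lemma nat_lt_pow: "q \<ge> 2 \<Longrightarrow> x < q ^ x"
proof (induction x)
  case 0 then show ?case by simp
next
  case (Suc x)
  then have "q ^ x \<ge> 1" by simp
  moreover have "q * q ^ x \<ge> 2 * q ^ x" using Suc by simp
  moreover have "x < q ^ x" using Suc.IH[OF Suc.prems] .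
  moreover have "q ^ Suc x = q * q ^ x" by simp
  ultimately show ?case by linarith
qed

lemma lg_mono: "a \<le> b \<Longrightarrow> lg a \<le> lg b"
  unfolding lg_def using floorlog_mono[of a b 2] by auto

lemma lg_ge1: "1 \<le> lg a" unfolding lg_def by auto

lemma mcost_le:
  assumes q: "q \<ge> 2" and x: "qlen q x \<le> Z" and y: "qlen q y \<le> Z" and s: "x < q ^ n \<or> y < q ^ n" and n: "1 \<le> n"
  shows "mcost q x y \<le> Z * (lg n * lg (lg n))"
proof -
  define a where "a = max (qlen q x) (qlen q y)"
  define b where "b = min (qlen q x) (qlen q y)"
  have "b \<le> n" using s qlen_le[OF q _ n] unfolding b_def by (force simp: min_def)
  then have 1: "lg b \<le> lg n" and 2: "lg (lg b) \<le> lg (lg n)" using lg_mono by auto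
  have "a \<le> Z" using x y unfolding a_def by auto
  have "mcost q x y = a * lg b * lg (lg b)" unfolding mcost_def a_def b_def Let_def by simp
  also have "\<dots> \<le> Z * lg n * lg (lg n)" using 1 2 \<open>a \<le> Z\<close> by (intro mult_le_mono) auto
  finally show ?thesis by (simp add: mult.assoc)
qed

definition "CBODY = Seq (Assign 20 (Plus 20 10)) (Seq (Assign 21 (Inp 20 3)) (Seq (Assign 19 (ShL 19 10)) (Assign 19 (Plus 19 21))))"
definition "CLOOP = While 20 2 CBODY"
definition "T1 = Seq (Assign 19 (ShL 6 5)) (Assign 0 (Plus 0 19))"
definition "T0 = Seq (Assign 19 (Cnst 0)) (Seq (Assign 20 (Cnst 0)) (Seq CLOOP (Seq (Assign 19 (ShR 19 7)) (Seq (Assign 19 (Times 19 6)) (Assign 0 (Plus 0 19))))))"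
definition "TRM = If 9 18 T1 T0"
definition "STEP = Seq (Assign 4 (Minus 4 10)) (Assign 3 (Minus 3 10))"
definition "U1a = Seq (Assign 22 (ShL 10 5)) (Seq (Assign 22 (Minus 22 10)) (Seq (Assign 6 (Times 6 22)) (Seq (Assign 23 (ShL 10 4)) (Seq (Assign 23 (Minus 23 10)) (Seq (Assign 6 (Quot 6 23)) (Assign 5 (Minus 5 10)))))))"
definition "U1 = Seq (If 9 5 U1a Skip) (Seq (Assign 7 (Plus 7 10)) STEP)"
definition "U0a = Seq (Assign 22 (Minus 4 5)) (Seq (Assign 22 (ShL 10 22)) (Seq (Assign 22 (Minus 22 10)) (Seq (Assign 6 (Times 6 22)) (Seq (Assign 23 (ShL 10 4)) (Seq (Assign 23 (Minus 23 10)) (Seq (Assign 6 (Quot 6 23)) STEP))))))"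
definition "U0 = If 5 4 U0a (Assign 8 (Cnst 0))"
definition "UPD = If 9 4 (If 9 18 U1 U0) (Assign 8 (Cnst 0))"
definition "BODY = Seq (Assign 18 (Inp 9 3)) (Seq TRM UPD)"
definition "MLOOP = While 9 8 BODY"
definition "SBODY = Seq (Assign 12 (Plus 12 10)) (Seq (Assign 13 (Plus 11 12)) (Seq (Assign 14 (ShL 10 13)) (Seq (Assign 14 (Minus 14 10)) (Seq (Assign 6 (Times 6 14)) (Seq (Assign 15 (ShL 10 12)) (Seq (Assign 15 (Minus 15 10)) (Assign 6 (Quot 6 15))))))))"
definition "SLOOP = While 12 2 SBODY"
definition "SETUP = Seq (Assign 10 (Cnst 1)) (Seq (Assign 6 (Cnst 1)) (Seq (Assign 11 (Minus 1 2)) (Seq (Assign 11 (Minus 11 10)) (Seq (Assign 12 (Cnst 0)) SLOOP))))"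
definition "INIT2 = Seq (Assign 3 (Reg 1)) (Seq (Assign 4 (Minus 1 10)) (Seq (Assign 5 (Reg 2)) (Seq (Assign 7 (Cnst 0)) (Assign 8 (Cnst 1)))))"
definition "MAIN = Seq SETUP (Seq INIT2 MLOOP)"
definition "PROG = If 9 2 (If 2 1 MAIN Skip) Skip"

locale L =
  fixes q :: nat and inp :: "nat \<Rightarrow> nat \<Rightarrow> nat" and n k :: nat
  assumes q2: "2 \<le> q" and k0: "0 < k" and kn: "k < n"
    and inpV: "\<And>p. inp 0 p \<le> 1" and inpD: "\<And>t p. inp t p < q"
begin

definition "hor p t = (\<Sum>u=1..t. inp u p * q ^ (t - u))"

lemma hor_Suc: "hor p (Suc t) = hor p t * q + inp (Suc t) p"
proof -
  have "hor p (Suc t) = (\<Sum>u=1..t. inp u p * q ^ (Suc t - u)) + inp (Suc t) p"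
    unfolding hor_def by simp
  also have "(\<Sum>u=1..t. inp u p * q ^ (Suc t - u)) = hor p t * q"
    unfolding hor_def sum_distrib_right
    by (rule sum.cong) (auto simp: Suc_diff_le)
  finally show ?thesis .
qed

lemma hor_lt: "hor p t < q ^ t"
proof (induction t)
  case 0 then show ?case by (simp add: hor_def)
next
  case (Suc t)
  have "hor p t * q + inp (Suc t) p < hor p t * q + q" using inpD[of "Suc t" p] by simp
  also have "\<dots> = (hor p t + 1) * q" by simp
  also have "\<dots> \<le> q ^ t * q" using Suc by (intro mult_le_mono) auto
  finally show ?case by (simp add: hor_Suc mult.commute)
qed

lemma n1: "1 \<le> n" using kn by simp

lemma ql: "x < q ^ n \<Longrightarrow> qlen q x \<le> n"
  using qlen_le[OF q2 _ n1] .

lemma ql_small: "x \<le> n \<Longrightarrow> qlen q x \<le> n"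
  using ql nat_lt_pow[OF q2, of n] by (meson le_less_trans)

lemma qlen1: "qlen q 1 = 1"
  using q2 by (simp add: qlen_def floorlog_def)

lemma qlen1': "qlen q (Suc 0) = 1"
  using qlen1 by simp

lemma qlen0: "qlen q 0 = 1"
  by (simp add: qlen_def floorlog_def)

lemma pow_mono_n: "a \<le> b \<Longrightarrow> q ^ a \<le> q ^ b"
  using q2 by (intro power_increasing) auto

lemma cloop:
  "s 2 = k \<Longrightarrow> s 10 = 1 \<Longrightarrow> s 3 = p \<Longrightarrow> p \<le> n \<Longrightarrow> t \<le> k \<Longrightarrow> s 20 = t \<Longrightarrow> s 19 = hor p t \<Longrightarrow>
   \<exists>s'. runs q inp CLOOP s s' ((k - t) * (9 * n + 13) + (n + 1)) \<and> s' 19 = hor p k \<and>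
        (\<forall>x. x \<notin> {19,20,21} \<longrightarrow> s' x = s x)"
proof (induction "k - t" arbitrary: t s)
  case 0
  then have t: "t = k" by simp
  have c: "cmpcost q 20 2 s \<le> n + 1" unfolding cmpcost_def using 0 t kn by (auto intro!: ql_small)
  show ?case
    by (rule exI[of _ s]) (use 0 t c in \<open>auto simp: CLOOP_def intro: runs_whileF\<close>)
next
  case (Suc d)
  have tk: "t < k" using Suc by simp
  define s1 where "s1 = s(20 := Suc t, 21 := inp (Suc t) p, 19 := hor p t * q, 19 := hor p t * q + inp (Suc t) p)"
  have hk: "hor p t < q ^ k" using hor_lt[of p t] pow_mono_n[of t k] tk by auto
  have hk2: "hor p t * q + inp (Suc t) p < q ^ n"
  proof -
    have "hor p (Suc t) < q ^ Suc t" by (rule hor_lt)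
    also have "\<dots> \<le> q ^ n" using tk kn by (intro pow_mono_n) auto
    finally show ?thesis by (simp add: hor_Suc)
  qed
  have hk3: "hor p t < q ^ n" using hk pow_mono_n[of k n] kn by auto
  have hk4: "hor p t * q < q ^ n" using hk2 by linarith
  have tn: "t \<le> n" "Suc t \<le> n" using tk kn by auto
  note a1 = ql_small[OF tn(1)] ql_small[OF tn(2)] ql_small[OF Suc.prems(4)]
  have a2: "qlen q (hor p t) \<le> n" "qlen q (hor p t * q) \<le> n" "qlen q (inp (Suc t) p) \<le> n"
    using ql[OF hk3] ql[OF hk4] ql[of "inp (Suc t) p"] inpD[of "Suc t" p] pow_mono_n[of 1 n] n1 by auto
  have body: "runs q inp CBODY s s1 (4 * (2 * n + 3))"
    unfolding CBODY_def s1_def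
    apply (rule runs_mono)
     apply (rule runs_seq_assign[where K = "2*n+2"])
      apply (simp add: Suc qlen1 qlen1') using a1 a2 apply linarith
     apply (rule runs_seq_assign[where K = "2*n+2"])
      apply (simp add: Suc) using a1 a2 apply linarith
     apply (rule runs_seq_assign[where K = "2*n+2"])
      apply (simp add: Suc qlen1 qlen1') using a1 a2 apply linarith
     apply (rule runs_assign'[where K = "2*n+2"])
      apply (simp add: Suc) using a1 a2 apply linarith
     apply (simp add: Suc)
    apply simp
    done
  have IH: "\<exists>s'. runs q inp CLOOP s1 s' ((k - Suc t) * (9 * n + 13) + (n + 1)) \<and> s' 19 = hor p k \<and>
        (\<forall>x. x \<notin> {19,20,21} \<longrightarrow> s' x = s1 x)"
    by (rule Suc.hyps) (use Suc tk in \<open>auto simp: s1_def hor_Suc\<close>)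
  then obtain s' where s': "runs q inp CLOOP s1 s' ((k - Suc t) * (9 * n + 13) + (n + 1))" "s' 19 = hor p k"
     "\<forall>x. x \<notin> {19,20,21} \<longrightarrow> s' x = s1 x" by blast
  have c: "cmpcost q 20 2 s \<le> n + 1" unfolding cmpcost_def using Suc tk kn by (auto intro!: ql_small)
  have R0: "runs q inp CLOOP s s' ((n+1) + 4 * (2 * n + 3) + ((k - Suc t) * (9 * n + 13) + (n + 1)))"
    unfolding CLOOP_def by (rule runs_whileT[OF _ c body[unfolded CLOOP_def] s'(1)[unfolded CLOOP_def]]) (use Suc tk in simp)
  have E: "(n+1) + 4 * (2 * n + 3) + ((k - Suc t) * (9 * n + 13) + (n + 1)) = (k - t) * (9 * n + 13) + (n + 1)"
    using tk by (simp add: Suc_diff_Suc[symmetric] algebra_simps)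
  have R: "runs q inp CLOOP s s' ((k - t) * (9 * n + 13) + (n + 1))"
    using R0 unfolding E .
  show ?case using R s' by (auto simp: s1_def)
qed


definition "a0 = n - k - 1"
definition "Z = 4 * (k * (n - k))"
definition "LL = lg n * lg (lg n)"
definition "ZL = Z * LL"
definition "KK = 3 * ZL"

lemma kd: "k \<le> k * (n - k)" "n - k \<le> k * (n - k)" "1 \<le> k * (n - k)"
  using k0 kn by auto

lemma Zfacts: "1 \<le> Z" "n \<le> Z" "k * (n - k) + n \<le> Z" "k + k * (n - k) + n \<le> Z" "k \<le> Z"
proof -
  have "n = k + (n - k)" using kn by simp
  then show "1 \<le> Z" "n \<le> Z" "k * (n - k) + n \<le> Z" "k + k * (n - k) + n \<le> Z" "k \<le> Z"
    using kd unfolding Z_def by linarith+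
qed

lemma LL1: "1 \<le> LL" unfolding LL_def using lg_ge1[of n] lg_ge1[of "lg n"] by simp

lemma ZLfacts: "Z \<le> ZL" "n \<le> ZL" "1 \<le> ZL"
  using Zfacts LL1 unfolding ZL_def by (auto intro: order.trans[OF _ mult_le_mono[of Z Z 1 LL]])

lemma qlZ: "x < q ^ Z \<Longrightarrow> qlen q x \<le> Z"
  using qlen_le[OF q2 _ Zfacts(1)] .

lemma mcZ: "x < q ^ Z \<Longrightarrow> y < q ^ Z \<Longrightarrow> x < q ^ n \<or> y < q ^ n \<Longrightarrow> mcost q x y \<le> ZL"
  unfolding ZL_def LL_def using mcost_le[OF q2 qlZ qlZ _ n1] by blast

lemma powZ: "e \<le> Z \<Longrightarrow> x < q ^ e \<Longrightarrow> x < q ^ Z"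
  using pow_mono_n[of e Z] by auto

lemma small_lt: "x \<le> n \<Longrightarrow> x < q ^ n"
  using nat_lt_pow[OF q2, of n] by auto

lemma pm1_lt: "e \<le> n \<Longrightarrow> q ^ e - 1 < q ^ n"
  using pow_mono_n[of e n] q2 by (simp add: less_eq_Suc_le)

lemma pm1_pos: "0 < e \<Longrightarrow> 0 < q ^ e - 1"
  using q2 one_less_power[of q e] by simp

lemma div_from: "(x::nat) * d = y \<Longrightarrow> 0 < d \<Longrightarrow> y div d = x"
  by auto

lemma gbk: "r \<le> m \<Longrightarrow> r \<le> k \<Longrightarrow> m - r + 1 \<le> n - k \<Longrightarrow> gb q m r \<le> q ^ (k * (n - k))"
proof -
  assume a: "r \<le> m" "r \<le> k" "m - r + 1 \<le> n - k"
  have "gb q m r \<le> q ^ (r * (m - r + 1))" using gb_bound[OF q2 a(1)] .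
  also have "\<dots> \<le> q ^ (k * (n - k))" using a by (intro pow_mono_n mult_le_mono) auto
  finally show ?thesis .
qed

end

context L begin

lemma a0n: "a0 + k = n - 1" "a0 < n" unfolding a0_def using kn by auto

lemma sloop:
  "s 2 = k \<Longrightarrow> s 10 = 1 \<Longrightarrow> s 11 = a0 \<Longrightarrow> i \<le> k \<Longrightarrow> s 12 = i \<Longrightarrow> s 6 = gb q (a0 + i) i \<Longrightarrow>
   \<exists>s'. runs q inp SLOOP s s' ((k - i) * (9 * KK + 8) + KK) \<and> s' 6 = gb q (a0 + k) k \<and>
        (\<forall>x. x \<notin> {6,12,13,14,15} \<longrightarrow> s' x = s x)"
proof (induction "k - i" arbitrary: i s)
  case 0
  then have t: "i = k" by simp
  have c: "cmpcost q 12 2 s \<le> KK" unfolding cmpcost_def KK_def using 0 t kn ql_small[of k] ZLfacts by auto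
  show ?case
    by (rule exI[of _ s]) (use 0 t c in \<open>auto simp: SLOOP_def intro: runs_whileF\<close>)
next
  case (Suc d)
  have ik: "i < k" using Suc by simp
  define G where "G = gb q (a0 + i) i"
  define e where "e = a0 + Suc i"
  have e_eq: "a0 + Suc i = e" "Suc (a0 + i) = e" unfolding e_def by auto
  have en: "e < n" unfolding e_def using a0n ik by simp
  have Gb: "G \<le> q ^ (k * (n - k))" unfolding G_def
    by (rule gbk) (use ik kn in \<open>auto simp: a0_def\<close>)
  have "k * (n - k) < Z" using Zfacts(3) kn by linarith
  then have "q ^ (k * (n - k)) < q ^ Z" using q2 by (intro power_strict_increasing) auto
  then have GZ: "G < q ^ Z" using Gb by linarith
  have e1: "q ^ e - 1 < q ^ n" by (rule pm1_lt) (use en in simp)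
  have e2: "q ^ Suc i - 1 < q ^ n" by (rule pm1_lt) (use ik kn in simp)
  have GeZ: "G * (q ^ e - 1) < q ^ Z"
  proof -
    have "G * (q ^ e - 1) \<le> q ^ (k * (n - k)) * (q ^ e - 1)"
      using Gb by (rule mult_le_mono1)
    also have "\<dots> < q ^ (k * (n - k)) * q ^ n"
      using e1 q2 by (intro mult_less_mono2) auto
    also have "\<dots> = q ^ (k * (n - k) + n)" by (simp add: power_add)
    also have "\<dots> \<le> q ^ Z" using Zfacts by (intro pow_mono_n) auto
    finally show ?thesis .
  qed
  have nZ: "q ^ n \<le> q ^ Z" using Zfacts pow_mono_n by auto
  have qe: "q ^ e < q ^ n" using en q2 by (intro power_strict_increasing) auto
  have mc1: "mcost q G (q ^ e - 1) \<le> ZL" using mcZ GZ e1 nZ by auto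
  have mc2: "mcost q (G * (q ^ e - 1)) (q ^ Suc i - 1) \<le> ZL" using mcZ GeZ e2 nZ by auto
  have qls: "qlen q a0 \<le> n" "qlen q i \<le> n" "qlen q (Suc i) \<le> n" "qlen q e \<le> n" "qlen q (q ^ e) \<le> n"
    "qlen q (q ^ Suc i) \<le> n"
    using ql_small ql qe ik kn en a0n pow_mono_n[of "Suc i" n] q2 by (auto simp del: power_Suc intro!: ql power_strict_increasing)
  note facts = qls ZLfacts KK_def ik kn en mc1 mc2 qlen1 qlen1'
  have Gn: "gb q (a0 + Suc i) (Suc i) = G * (q ^ e - 1) div (q ^ Suc i - 1)"
    unfolding G_def e_def using gb_I1[OF q2, of "a0 + i" i] pm1_pos[of "Suc i"]
    by (intro div_from[symmetric]) auto
  define s1 where "s1 = s(12 := Suc i, 13 := e, 14 := q ^ e, 14 := q ^ e - 1, 6 := G * (q ^ e - 1),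
      15 := q ^ Suc i, 15 := q ^ Suc i - 1, 6 := G * (q ^ e - 1) div (q ^ Suc i - 1))"
  have body: "runs q inp SBODY s s1 (8 * Suc KK)"
    unfolding SBODY_def s1_def
    apply (rule runs_mono)
     apply (rule runs_seq_assign[where K = KK])
      subgoal using facts Suc.prems by (simp add: max_def)
     apply (rule runs_seq_assign[where K = KK])
      subgoal using facts Suc.prems by (simp add: max_def e_eq)
     apply (rule runs_seq_assign[where K = KK])
      subgoal using facts Suc.prems by (simp add: max_def e_eq)
     apply (rule runs_seq_assign[where K = KK])
      subgoal using facts Suc.prems by (simp add: max_def e_eq)
     apply (rule runs_seq_assign[where K = KK])
      subgoal using facts Suc.prems by (simp add: max_def e_eq G_def[symmetric])
     apply (rule runs_seq_assign[where K = KK])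
      subgoal using facts Suc.prems by (simp add: max_def e_eq G_def[symmetric])
     apply (rule runs_seq_assign[where K = KK])
      subgoal using facts Suc.prems by (simp add: max_def e_eq G_def[symmetric])
     apply (rule runs_assign'[where K = KK])
      subgoal using facts Suc.prems by (simp add: max_def e_eq G_def[symmetric])
     subgoal using Suc.prems by (simp add: e_eq G_def[symmetric])
    apply simp
    done
  have IH: "\<exists>s'. runs q inp SLOOP s1 s' ((k - Suc i) * (9 * KK + 8) + KK) \<and> s' 6 = gb q (a0 + k) k \<and>
        (\<forall>x. x \<notin> {6,12,13,14,15} \<longrightarrow> s' x = s1 x)"
    by (rule Suc.hyps) (use Suc ik Gn in \<open>auto simp: s1_def\<close>)
  then obtain s' where s': "runs q inp SLOOP s1 s' ((k - Suc i) * (9 * KK + 8) + KK)" "s' 6 = gb q (a0 + k) k"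
     "\<forall>x. x \<notin> {6,12,13,14,15} \<longrightarrow> s' x = s1 x" by blast
  have c: "cmpcost q 12 2 s \<le> KK" unfolding cmpcost_def KK_def using Suc ik kn ql_small[of k] ql_small[of i] ZLfacts by auto
  have R0: "runs q inp SLOOP s s' (KK + 8 * Suc KK + ((k - Suc i) * (9 * KK + 8) + KK))"
    unfolding SLOOP_def by (rule runs_whileT[OF _ c body[unfolded SLOOP_def] s'(1)[unfolded SLOOP_def]]) (use Suc ik in simp)
  have E: "KK + 8 * Suc KK + ((k - Suc i) * (9 * KK + 8) + KK) = (k - i) * (9 * KK + 8) + KK"
    using ik by (simp add: Suc_diff_Suc[symmetric] algebra_simps)
  have R: "runs q inp SLOOP s s' ((k - i) * (9 * KK + 8) + KK)"
    using R0 unfolding E .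
  show ?case using R s' by (auto simp: s1_def)
qed

end

context L begin

definition "V j = inp 0 (n + 1 - j)"
definition "W j = (\<Sum>l=1..j. V l)"
definition "col j = hor (n + 1 - j) k"
definition "trm j = (V j * q ^ (k - W (j - 1)) + (1 - V j) * (col j div q ^ W (j - 1))) * gb q (n - j) (k - W (j - 1))"

lemma V_le: "V j \<le> 1" unfolding V_def by (rule inpV)

lemma W_Suc: "W (Suc j) = W j + V (Suc j)" unfolding W_def by simp
lemma W_0 [simp]: "W 0 = 0" unfolding W_def by simp

lemma W_le: "W j \<le> j"
  by (induction j) (auto simp: W_Suc intro: add_mono[OF _ V_le, simplified])

lemma W_add: "W (a + b) \<le> W a + b"
  by (induction b) (auto simp: W_Suc intro: add_mono[OF _ V_le, simplified])

lemma gbW: "1 \<le> j \<Longrightarrow> j \<le> n \<Longrightarrow> gb q (n - j) (k - W (j - 1)) \<le> q ^ (k * (n - k))"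
proof -
  assume j: "1 \<le> j" "j \<le> n"
  have w: "W (j - 1) \<le> j - 1" by (rule W_le)
  show ?thesis
  proof (cases "k - W (j - 1) \<le> n - j")
    case True
    show ?thesis by (rule gbk) (use True j w kn in auto)
  next
    case False then show ?thesis by (simp add: gb_zero)
  qed
qed

lemma colk: "col j < q ^ k" unfolding col_def by (rule hor_lt)

lemma trm_le: assumes "1 \<le> j" "j \<le> n" shows "trm j \<le> q ^ (k + k * (n - k))"
proof -
  have a: "V j * q ^ (k - W (j - 1)) + (1 - V j) * (col j div q ^ W (j - 1)) \<le> q ^ k"
  proof (cases "V j = 1")
    case True then show ?thesis by (simp add: pow_mono_n)
  next
    case False
    then have "V j = 0" using V_le[of j] by auto
    moreover have "col j div q ^ W (j - 1) \<le> q ^ k" using colk[of j] div_le_dividend[of "col j" "q ^ W (j - 1)"] by linarith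
    ultimately show ?thesis by simp
  qed
  show ?thesis unfolding trm_def power_add using a gbW[OF assms] by (rule mult_le_mono)
qed

lemma sum_trm_le: "j \<le> n \<Longrightarrow> (\<Sum>i=1..j. trm i) < q ^ Z"
proof -
  assume j: "j \<le> n"
  have "(\<Sum>i=1..j. trm i) \<le> (\<Sum>i=1..j. q ^ (k + k * (n - k)))"
    by (rule sum_mono) (use j trm_le in auto)
  also have "\<dots> = j * q ^ (k + k * (n - k))" by simp
  also have "\<dots> \<le> n * q ^ (k + k * (n - k))" using j by simp
  also have "\<dots> < q ^ n * q ^ (k + k * (n - k))" using nat_lt_pow[OF q2, of n] q2 by simp
  also have "\<dots> = q ^ (k + k * (n - k) + n)" by (simp add: power_add)
  also have "\<dots> \<le> q ^ Z" using Zfacts by (intro pow_mono_n) auto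
  finally show ?thesis .
qed

definition regs :: "(nat \<Rightarrow> nat) \<Rightarrow> nat \<Rightarrow> bool" where "regs s j \<longleftrightarrow> s 1 = n \<and> s 2 = k \<and> s 3 = n + 1 - j \<and> s 4 = n - j \<and> s 5 = k - W (j - 1) \<and>
   s 6 = gb q (n - j) (k - W (j - 1)) \<and> s 7 = W (j - 1) \<and> s 9 = 0 \<and> s 10 = 1 \<and> 1 \<le> j \<and> j \<le> n \<and>
   k - W (j - 1) \<le> n - j"

definition minv :: "(nat \<Rightarrow> nat) \<Rightarrow> nat \<Rightarrow> bool" where "minv s j \<longleftrightarrow> regs s j \<and> s 8 = 1 \<and> s 0 = (\<Sum>i=1..j-1. trm i)"

lemma zcount: "regs s j \<Longrightarrow> (j - 1) - W (j - 1) < n - k"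
proof -
  assume r: "regs s j"
  have a: "k - W (j - 1) \<le> n - j" "1 \<le> j" "j \<le> n" using r unfolding regs_def by auto
  have b: "W (j - 1) \<le> j - 1" by (rule W_le)
  show ?thesis using a b kn by linarith
qed

lemma tail_zero:
  assumes "1 \<le> j" "j < n" "V j = 0" "k - W (j - 1) = n - j" "j < i" "i \<le> n"
  shows "trm i = 0"
proof -
  have wj: "W j = W (j - 1)" using assms W_Suc[of "j - 1"] by simp
  have "W (i - 1) \<le> W j + (i - 1 - j)" using W_add[of j "i - 1 - j"] assms by simp
  then have "n - i < k - W (i - 1)" using assms wj by linarith
  then show ?thesis unfolding trm_def by (simp add: gb_zero)
qed

end

context L begin

definition "CZ = k * (9 * n + 13) + (n + 1)"

lemma sum_upto_Suc: "1 \<le> j \<Longrightarrow> (\<Sum>i=1..j-1. trm i) + trm j = (\<Sum>i=1..j. trm i)"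
  by (cases j) auto

lemma qZ_lt: "e \<le> k * (n - k) + n \<Longrightarrow> q ^ e \<le> q ^ Z"
  using Zfacts by (intro pow_mono_n) auto

lemma trm_run:
  assumes r: "regs s j" and s18: "s 18 = V j" and s0: "s 0 = (\<Sum>i=1..j-1. trm i)"
  shows "\<exists>s'. runs q inp TRM s s' (KK + 5 * Suc KK + (1 - V j) * CZ) \<and> s' 0 = (\<Sum>i=1..j. trm i) \<and>
      (\<forall>x. x \<notin> {0,19,20,21} \<longrightarrow> s' x = s x)"
proof -
  define w where "w = W (j - 1)"
  define rr where "rr = k - w"
  define G where "G = gb q (n - j) rr"
  have R: "s 1 = n" "s 2 = k" "s 3 = n + 1 - j" "s 4 = n - j" "s 5 = rr" "s 6 = G" "s 7 = w" "s 9 = 0" "s 10 = 1"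
     "1 \<le> j" "j \<le> n" "rr \<le> n - j"
    using r unfolding regs_def rr_def G_def w_def by auto
  have Gb: "G \<le> q ^ (k * (n - k))" unfolding G_def rr_def w_def using gbW R by auto
  have GZ: "G < q ^ Z"
  proof -
    have "k * (n - k) < Z" using Zfacts(3) kn by linarith
    then have "q ^ (k * (n - k)) < q ^ Z" using q2 by (intro power_strict_increasing) auto
    then show ?thesis using Gb by linarith
  qed
  have S1: "(\<Sum>i=1..j-1. trm i) + trm j < q ^ Z" using sum_trm_le[of j] sum_upto_Suc R by simp
  have rrn: "rr \<le> n" "w \<le> n" "n + 1 - j \<le> n" using R W_le[of "j - 1"] unfolding w_def by auto
  have qls: "qlen q rr \<le> n" "qlen q w \<le> n" "qlen q (n + 1 - j) \<le> n" "qlen q G \<le> Z"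
    "qlen q (s 0) \<le> Z" "qlen q 0 \<le> n" "qlen q 1 \<le> n"
    using ql_small rrn qlZ GZ s0 S1 n1 qlen0 qlen1 by auto
  note facts = qls ZLfacts Zfacts KK_def R qlen1 qlen1' qlen0
  show ?thesis
  proof (cases "V j = 1")
    case True
    have t: "trm j = q ^ rr * G" unfolding trm_def using True by (simp add: rr_def w_def G_def)
    have v: "qlen q (s 0 + G * q ^ rr) \<le> Z"
      using qlZ[of "s 0 + G * q ^ rr"] S1 t s0 by (simp add: mult.commute)
    have v2: "qlen q (G * q ^ rr) \<le> Z"
      using qlZ[of "G * q ^ rr"] S1 t s0 by (simp add: mult.commute)
    define s' where "s' = s(19 := G * q ^ rr, 0 := s 0 + G * q ^ rr)"
    have "runs q inp TRM s s' (KK + 2 * Suc KK)"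
      unfolding TRM_def T1_def s'_def
      apply (rule runs_ifT[where K = KK])
        apply (simp add: R s18 True)
       apply (simp add: cmpcost_def R s18 True qlen0 qlen1') using ZLfacts KK_def apply linarith
      apply (rule runs_mono)
       apply (rule runs_seq_assign[where K = KK])
        subgoal using facts by (simp add: max_def)
       apply (rule runs_assign'[where K = KK])
        subgoal using facts v v2 by (simp add: max_def)
       apply (simp add: R)
      apply simp
      done
    then have "runs q inp TRM s s' (KK + 5 * Suc KK + (1 - V j) * CZ)"
      by (rule runs_mono) (simp add: True)
    moreover have "s' 0 = (\<Sum>i=1..j. trm i)"
    proof -
      have "s' 0 = s 0 + trm j" unfolding s'_def t by simp
      then show ?thesis using s0 sum_upto_Suc[OF R(10)] by simp
    qed
    ultimately show ?thesis unfolding s'_def by auto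
  next
    case False
    then have V0: "V j = 0" using V_le[of j] by auto
    define c where "c = col j"
    have t: "trm j = (c div q ^ w) * G" unfolding trm_def using V0 by (simp add: rr_def w_def G_def c_def)
    define s1 where "s1 = s(19 := 0, 20 := 0)"
    have run1: "runs q inp (Seq (Assign 19 (Cnst 0)) (Assign 20 (Cnst 0))) s s1 (2 * Suc KK)"
      unfolding s1_def
      apply (rule runs_mono)
       apply (rule runs_seq[OF runs_assign[where K = KK] runs_assign'[where K = KK]])
        subgoal using facts by simp
       subgoal using facts by simp
       apply simp
      apply simp
      done
    obtain s2 where s2: "runs q inp CLOOP s1 s2 ((k - 0) * (9 * n + 13) + (n + 1))" "s2 19 = hor (n + 1 - j) k"
      "\<forall>x. x \<notin> {19,20,21} \<longrightarrow> s2 x = s1 x"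
    proof -
      have "\<exists>s2. runs q inp CLOOP s1 s2 ((k - 0) * (9 * n + 13) + (n + 1)) \<and> s2 19 = hor (n + 1 - j) k \<and>
        (\<forall>x. x \<notin> {19,20,21} \<longrightarrow> s2 x = s1 x)"
        by (rule cloop) (use R in \<open>simp_all add: s1_def hor_def\<close>)
      then show ?thesis using that by blast
    qed
    have s2v: "s2 0 = s 0" "s2 6 = G" "s2 7 = w" using s2(3) R unfolding s1_def by auto
    have ck: "c < q ^ k" unfolding c_def by (rule colk)
    have cn: "c div q ^ w < q ^ n"
      using ck div_le_dividend[of c "q ^ w"] pow_mono_n[of k n] kn by linarith
    have cZ: "c div q ^ w < q ^ Z" "c < q ^ Z" using cn ck pow_mono_n[of n Z] pow_mono_n[of k Z] Zfacts by linarith+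
    have mc: "mcost q (c div q ^ w) G \<le> ZL" using mcZ cZ GZ cn by auto
    have v: "qlen q (s 0 + c div q ^ w * G) \<le> Z" "qlen q (c div q ^ w * G) \<le> Z"
      using qlZ[of "s 0 + c div q ^ w * G"] qlZ[of "c div q ^ w * G"] S1 t s0 by auto
    have qc: "qlen q c \<le> Z" using qlZ cZ by auto
    define s' where "s' = s2(19 := c div q ^ w, 19 := c div q ^ w * G, 0 := s 0 + c div q ^ w * G)"
    have run3: "runs q inp (Seq (Assign 19 (ShR 19 7)) (Seq (Assign 19 (Times 19 6)) (Assign 0 (Plus 0 19)))) s2 s' (3 * Suc KK)"
      unfolding s'_def
      apply (rule runs_mono)
       apply (rule runs_seq_assign[where K = KK])
        subgoal using facts s2v s2(2) qc by (simp add: c_def col_def)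
       apply (rule runs_seq_assign[where K = KK])
        subgoal using facts s2v s2(2) mc by (simp add: c_def col_def)
       apply (rule runs_assign'[where K = KK])
        subgoal using facts s2v s2(2) v by (simp add: c_def col_def max_def)
       apply (simp add: s2v s2(2) c_def col_def)
      apply simp
      done
    have "runs q inp TRM s s' (KK + (2 * Suc KK + (((k - 0) * (9 * n + 13) + (n + 1)) + 3 * Suc KK)))"
      unfolding TRM_def T0_def
      apply (rule runs_ifF[where K = KK])
        apply (simp add: R s18 V0)
       apply (simp add: cmpcost_def R s18 V0 qlen0) using ZLfacts KK_def apply linarith
      apply (rule runs_mono)
       apply (rule runs_seq_assign[where K = KK])
        subgoal using facts by simp
       apply (rule runs_seq_assign[where K = KK])
        subgoal using facts by simp
       apply (simp only: aval.simps)
       apply (rule runs_seq[OF s2(1)[unfolded s1_def] run3])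
      apply simp
      done
    then have "runs q inp TRM s s' (KK + 5 * Suc KK + (1 - V j) * CZ)"
      by (rule runs_mono) (simp add: V0 CZ_def)
    moreover have "s' 0 = (\<Sum>i=1..j. trm i)"
    proof -
      have "s' 0 = s 0 + trm j" unfolding s'_def t by simp
      then show ?thesis using s0 sum_upto_Suc[OF R(10)] by simp
    qed
    moreover have "\<forall>x. x \<notin> {0,19,20,21} \<longrightarrow> s' x = s x" using s2(3) unfolding s'_def s1_def by auto
    ultimately show ?thesis by auto
  qed
qed

end

context L begin

definition "CU = 4 * KK + 10 * Suc KK"

lemma GqZ: assumes "G \<le> q ^ (k * (n - k))" "e \<le> n" shows "G * (q ^ e - 1) < q ^ Z"
proof -
  have e1: "q ^ e - 1 < q ^ n" using pm1_lt assms by auto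
  have "G * (q ^ e - 1) \<le> q ^ (k * (n - k)) * (q ^ e - 1)"
    using assms(1) by (rule mult_le_mono1)
  also have "\<dots> < q ^ (k * (n - k)) * q ^ n"
    using e1 q2 by (intro mult_less_mono2) auto
  also have "\<dots> = q ^ (k * (n - k) + n)" by (simp add: power_add)
  also have "\<dots> \<le> q ^ Z" using Zfacts by (intro pow_mono_n) auto
  finally show ?thesis .
qed

lemma GZ: assumes "G \<le> q ^ (k * (n - k))" shows "G < q ^ Z"
proof -
  have "k * (n - k) < Z" using Zfacts(3) kn by linarith
  then have "q ^ (k * (n - k)) < q ^ Z" using q2 by (intro power_strict_increasing) auto
  then show ?thesis using assms by linarith
qed

lemma cmpc: "s a \<le> n \<Longrightarrow> s b \<le> n \<Longrightarrow> cmpcost q a b s \<le> KK"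
  unfolding cmpcost_def KK_def using ql_small[of "s a"] ql_small[of "s b"] ZLfacts by auto

lemma KK1: "1 \<le> KK" "0 < KK" "Suc 0 \<le> KK" "n \<le> KK" "Z \<le> KK" "Suc Z \<le> KK" unfolding KK_def using ZLfacts Zfacts by auto

lemma acZ: "x < q ^ Z \<Longrightarrow> qlen q x \<le> Z" by (rule qlZ)

lemma ac_plus: "s a < q ^ Z \<Longrightarrow> s b < q ^ Z \<Longrightarrow> acost q (Plus a b) s \<le> KK"
  using acZ[of "s a"] acZ[of "s b"] KK1 by (auto simp: max_def)
lemma ac_minus: "s a < q ^ Z \<Longrightarrow> s b < q ^ Z \<Longrightarrow> acost q (Minus a b) s \<le> KK"
  using acZ[of "s a"] acZ[of "s b"] KK1 by (auto simp: max_def)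
lemma ac_shl: "s a < q ^ Z \<Longrightarrow> s b \<le> n \<Longrightarrow> acost q (ShL a b) s \<le> KK"
  using acZ[of "s a"] ql_small[of "s b"] KK1 ZLfacts unfolding KK_def by auto
lemma ac_times: "s a < q ^ Z \<Longrightarrow> s b < q ^ Z \<Longrightarrow> s a < q ^ n \<or> s b < q ^ n \<Longrightarrow> acost q (Times a b) s \<le> KK"
  using mcZ[of "s a" "s b"] ZLfacts unfolding KK_def by auto
lemma ac_quot: "s a < q ^ Z \<Longrightarrow> s b < q ^ Z \<Longrightarrow> s a < q ^ n \<or> s b < q ^ n \<Longrightarrow> acost q (Quot a b) s \<le> KK"
  using mcZ[of "s a" "s b"] ZLfacts unfolding KK_def by auto
lemma ac_cnst: "c \<le> n \<Longrightarrow> acost q (Cnst c) s \<le> KK"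
  using ql_small[of c] KK1 by auto
lemmas ac = ac_plus ac_minus ac_shl ac_times ac_quot ac_cnst

lemma smallZ: "x \<le> n \<Longrightarrow> x < q ^ Z"
  using small_lt[of x] pow_mono_n[of n Z] Zfacts by auto

lemma qlt: "e < n \<Longrightarrow> q ^ e < q ^ n" using q2 by (intro power_strict_increasing) auto

lemma upd_cont:
  assumes r: "regs s j" and s18: "s 18 = V j" and jn: "j < n"
    and c: "V j = 1 \<or> k - W (j - 1) < n - j"
  shows "\<exists>s'. runs q inp UPD s s' CU \<and> regs s' (Suc j) \<and> s' 0 = s 0 \<and> s' 8 = s 8"
proof -
  define w where "w = W (j - 1)"
  define rr where "rr = k - w"
  define m where "m = n - j"
  define G where "G = gb q m rr"
  have R: "s 1 = n" "s 2 = k" "s 3 = n + 1 - j" "s 4 = m" "s 5 = rr" "s 6 = G" "s 7 = w" "s 9 = 0" "s 10 = 1"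
     "1 \<le> j" "j \<le> n" "rr \<le> m"
    using r unfolding regs_def rr_def G_def w_def m_def by auto
  have m0: "0 < m" "m < n" using jn R unfolding m_def by auto
  have Gb: "G \<le> q ^ (k * (n - k))" unfolding G_def rr_def w_def m_def using gbW R by auto
  have GZ': "G < q ^ Z" using GZ[OF Gb] .
  have wj: "W j = w + V j" using W_Suc[of "j - 1"] R unfolding w_def by simp
  have cle: "m \<le> n" "rr \<le> n" "V j \<le> n" "0 \<le> n" "1 \<le> n" "0 < n" "Suc 0 \<le> n" "m - rr \<le> n"
    "n + 1 - j \<le> n" "w \<le> n" "Suc w \<le> n"
    using R m0 V_le[of j] n1 W_le[of "j - 1"] unfolding w_def by auto
  have vn: "q ^ m - 1 < q ^ n" "q ^ rr - 1 < q ^ n" "q ^ (m - rr) - 1 < q ^ n"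
    using pm1_lt cle by auto
  have nZ: "q ^ n \<le> q ^ Z" using pow_mono_n Zfacts by auto
  have vZ1: "rr < q ^ Z" "m < q ^ Z" "w < q ^ Z" "n + 1 - j < q ^ Z" "Suc w < q ^ Z" "m - rr < q ^ Z"
    "1 < q ^ Z" "0 < q ^ Z" "Suc 0 < q ^ Z" "Suc n - j < q ^ Z" using smallZ cle q2 by auto
  have mrn: "rr < n" "m - rr < n" using m0 R by auto
  have vZ2: "q ^ m < q ^ Z" "q ^ rr < q ^ Z" "q ^ (m - rr) < q ^ Z"
    using qlt[OF m0(2)] qlt[OF mrn(1)] qlt[OF mrn(2)] nZ by auto
  have vZ3: "q ^ m - 1 < q ^ Z" "q ^ rr - 1 < q ^ Z" "q ^ (m - rr) - 1 < q ^ Z"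
    using vn nZ by auto
  have vZ4: "G * (q ^ rr - 1) < q ^ Z" "G * (q ^ (m - rr) - 1) < q ^ Z"
    using GqZ[OF Gb] cle by auto
  have vZ5: "q ^ m - Suc 0 < q ^ Z" "q ^ rr - Suc 0 < q ^ Z" "q ^ (m - rr) - Suc 0 < q ^ Z"
    "G * (q ^ rr - Suc 0) < q ^ Z" "G * (q ^ (m - rr) - Suc 0) < q ^ Z"
    "q ^ m - Suc 0 < q ^ n" "q ^ rr - Suc 0 < q ^ n" "q ^ (m - rr) - Suc 0 < q ^ n"
    using vZ3 vZ4 vn by auto
  note vZ = vZ1 vZ2 vZ3 vZ4 vZ5 GZ'
  show ?thesis
  proof (cases "V j = 1")
    case V1: True
    show ?thesis
    proof (cases "rr = 0")
      case r0: True
      define s' where "s' = s(7 := Suc w, 4 := m - 1, 3 := n + 1 - j - 1)"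
      have run: "runs q inp UPD s s' CU"
        unfolding UPD_def U1_def STEP_def s'_def CU_def
        apply (rule runs_mono)
         apply (rule runs_ifT[where K = KK])
           apply (simp add: R m0)
          apply (rule cmpc) apply (simp add: R cle) apply (simp add: R cle)
         apply (rule runs_ifT[where K = KK])
           apply (simp add: R V1 s18)
          apply (rule cmpc) apply (simp add: R s18 V1 cle) apply (simp add: R s18 V1 cle)
         apply (rule runs_seq)
          apply (rule runs_ifF[where K = KK])
            apply (simp add: R r0)
           apply (rule cmpc) apply (simp add: R r0 cle) apply (simp add: R r0 cle)
          apply (rule runs_skip)
         apply (rule runs_seq_assign[where K = KK])
          subgoal by (rule ac; simp add: R vZ vn cle)
         apply (rule runs_seq_assign[where K = KK])
          subgoal by (rule ac; simp add: R vZ vn cle)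
         apply (rule runs_assign'[where K = KK])
          subgoal by (rule ac; simp add: R vZ vn cle)
         apply (simp add: R)
        apply simp
        done
      have "regs s' (Suc j)"
        unfolding regs_def s'_def using R wj V1 r0 jn unfolding rr_def G_def m_def
        by (auto simp: rr_def)
      then show ?thesis using run unfolding s'_def by auto
    next
      case r1: False
      obtain m' where m': "m = Suc m'" using m0 by (cases m) auto
      obtain r' where r': "rr = Suc r'" using r1 by (cases rr) auto
      have Gn: "gb q (m - 1) (rr - 1) = G * (q ^ rr - 1) div (q ^ m - 1)"
        unfolding G_def m' r' using gb_I1[OF q2, of m' r'] pm1_pos[of "Suc m'"]
        by (intro div_from[symmetric]) auto
      define s' where "s' = s(22 := q ^ rr, 22 := q ^ rr - 1, 6 := G * (q ^ rr - 1), 23 := q ^ m, 23 := q ^ m - 1,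
          6 := G * (q ^ rr - 1) div (q ^ m - 1), 5 := rr - 1, 7 := Suc w, 4 := m - 1, 3 := n + 1 - j - 1)"
      have run: "runs q inp UPD s s' CU"
        unfolding UPD_def U1_def U1a_def STEP_def s'_def CU_def
        apply (rule runs_mono)
         apply (rule runs_ifT[where K = KK])
           apply (simp add: R m0)
          apply (rule cmpc) apply (simp add: R cle) apply (simp add: R cle)
         apply (rule runs_ifT[where K = KK])
           apply (simp add: R V1 s18)
          apply (rule cmpc) apply (simp add: R s18 V1 cle) apply (simp add: R s18 V1 cle)
         apply (rule runs_seq)
          apply (rule runs_ifT[where K = KK])
            using r1 apply (simp add: R)
           apply (rule cmpc) apply (simp add: R cle) apply (simp add: R cle)
          apply (rule runs_seq_assign[where K = KK])
           subgoal by (rule ac; simp add: R vZ vn cle)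
          apply (rule runs_seq_assign[where K = KK])
           subgoal by (rule ac; simp add: R vZ vn cle)
          apply (rule runs_seq_assign[where K = KK])
           subgoal by (rule ac; simp add: R vZ vn cle)
          apply (rule runs_seq_assign[where K = KK])
           subgoal by (rule ac; simp add: R vZ vn cle)
          apply (rule runs_seq_assign[where K = KK])
           subgoal by (rule ac; simp add: R vZ vn cle)
          apply (rule runs_seq_assign[where K = KK])
           subgoal by (rule ac; simp add: R vZ vn cle)
          apply (rule runs_assign[where K = KK])
           subgoal by (rule ac; simp add: R vZ vn cle)
         apply (rule runs_seq_assign[where K = KK])
          subgoal by (rule ac; simp add: R vZ vn cle)
         apply (rule runs_seq_assign[where K = KK])
          subgoal by (rule ac; simp add: R vZ vn cle)
         apply (rule runs_assign'[where K = KK])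
          subgoal by (rule ac; simp add: R vZ vn cle)
         apply (simp add: R)
        apply simp
        done
      have fr: "k - Suc w \<le> n - Suc j" using R(12) unfolding rr_def m_def by linarith
      have "regs s' (Suc j)"
        unfolding regs_def s'_def using R wj V1 r1 jn Gn fr unfolding m_def rr_def G_def
        by (auto simp: rr_def)
      then show ?thesis using run unfolding s'_def by auto
    qed
  next
    case V0: False
    then have V0: "V j = 0" using V_le[of j] by auto
    have rm: "rr < m" using c V0 unfolding rr_def w_def m_def by auto
    obtain m' where m': "m = Suc m'" using m0 by (cases m) auto
    have Gn0: "gb q (Suc m') rr * (q ^ (Suc m' - rr) - 1) div (q ^ Suc m' - 1) = gb q m' rr"
      by (rule div_from) (use gb_I2[OF q2, of m' rr] pm1_pos[of "Suc m'"] in auto)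
    have Gn: "gb q (m - 1) rr = G * (q ^ (m - rr) - 1) div (q ^ m - 1)"
      unfolding G_def m' using Gn0 by simp
    define s' where "s' = s(22 := m - rr, 22 := q ^ (m - rr), 22 := q ^ (m - rr) - 1, 6 := G * (q ^ (m - rr) - 1),
        23 := q ^ m, 23 := q ^ m - 1, 6 := G * (q ^ (m - rr) - 1) div (q ^ m - 1), 4 := m - 1, 3 := n + 1 - j - 1)"
    have run: "runs q inp UPD s s' CU"
      unfolding UPD_def U0_def U0a_def STEP_def s'_def CU_def
      apply (rule runs_mono)
       apply (rule runs_ifT[where K = KK])
         apply (simp add: R m0)
        apply (rule cmpc) apply (simp add: R cle) apply (simp add: R cle)
       apply (rule runs_ifF[where K = KK])
         apply (simp add: R V0 s18)
        apply (rule cmpc) apply (simp add: R s18 V0 cle) apply (simp add: R s18 V0 cle)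
       apply (rule runs_ifT[where K = KK])
         apply (simp add: R rm)
        apply (rule cmpc) apply (simp add: R cle) apply (simp add: R cle)
       apply (rule runs_seq_assign[where K = KK])
        subgoal by (rule ac; simp add: R vZ vn cle)
       apply (rule runs_seq_assign[where K = KK])
        subgoal by (rule ac; simp add: R vZ vn cle)
       apply (rule runs_seq_assign[where K = KK])
        subgoal by (rule ac; simp add: R vZ vn cle)
       apply (rule runs_seq_assign[where K = KK])
        subgoal by (rule ac; simp add: R vZ vn cle)
       apply (rule runs_seq_assign[where K = KK])
        subgoal by (rule ac; simp add: R vZ vn cle)
       apply (rule runs_seq_assign[where K = KK])
        subgoal by (rule ac; simp add: R vZ vn cle)
       apply (rule runs_seq_assign[where K = KK])
        subgoal by (rule ac; simp add: R vZ vn cle)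
       apply (rule runs_seq_assign[where K = KK])
        subgoal by (rule ac; simp add: R vZ vn cle)
       apply (rule runs_assign'[where K = KK])
        subgoal by (rule ac; simp add: R vZ vn cle)
       apply (simp add: R)
      apply simp
      done
    have fr0: "k - w \<le> n - Suc j" using rm unfolding rr_def m_def by linarith
    have "regs s' (Suc j)"
      unfolding regs_def s'_def using R wj V0 rm jn Gn fr0 unfolding m_def rr_def G_def w_def
      by auto
    then show ?thesis using run unfolding s'_def by auto
  qed
qed

lemma upd_stop:
  assumes r: "regs s j" and s18: "s 18 = V j"
    and c: "j = n \<or> (V j = 0 \<and> k - W (j - 1) = n - j)"
  shows "\<exists>s'. runs q inp UPD s s' CU \<and> s' 0 = s 0 \<and> s' 8 = 0 \<and> s' 9 = s 9"
proof -
  have R: "s 1 = n" "s 2 = k" "s 4 = n - j" "s 5 = k - W (j - 1)" "s 9 = 0" "1 \<le> j" "j \<le> n"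
    using r unfolding regs_def by auto
  have cle: "n - j \<le> n" "k - W (j - Suc 0) \<le> n" "k - W (j - 1) \<le> n" "V j \<le> n" "0 \<le> n" "1 \<le> n" "0 < n" "Suc 0 \<le> n" using R kn V_le[of j] n1 by auto
  have W1: "W (j - 1) \<le> n" using W_le[of "j - 1"] R by simp
  show ?thesis
  proof (cases "j = n")
    case True
    have "runs q inp UPD s (s(8 := 0)) CU"
      unfolding UPD_def CU_def
      apply (rule runs_mono)
       apply (rule runs_ifF[where K = KK])
         apply (simp add: R True)
        apply (rule cmpc) apply (simp add: R cle) apply (simp add: R cle)
       apply (rule runs_assign'[where K = KK])
        apply (simp add: qlen0 KK1)
       apply simp
      apply simp
      done
    then show ?thesis by auto
  next
    case False
    then have c2: "V j = 0" "k - W (j - 1) = n - j" "j < n" "k - W (j - Suc 0) = n - j" using c R by auto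
    have "runs q inp UPD s (s(8 := 0)) CU"
      unfolding UPD_def U0_def CU_def
      apply (rule runs_mono)
       apply (rule runs_ifT[where K = KK])
         apply (simp add: R c2)
        apply (rule cmpc) apply (simp add: R cle) apply (simp add: R cle)
       apply (rule runs_ifF[where K = KK])
         apply (simp add: R c2 s18)
        apply (rule cmpc) apply (simp add: R s18 c2 cle) apply (simp add: R s18 c2 cle)
       apply (rule runs_ifF[where K = KK])
         apply (simp add: R c2)
        apply (rule cmpc) apply (simp add: R cle) apply (simp add: R cle)
       apply (rule runs_assign'[where K = KK])
        apply (simp add: qlen0 KK1)
       apply simp
      apply simp
      done
    then show ?thesis by auto
  qed
qed

end

context L begin

definition "CB = 2 + Suc KK + (KK + 5 * Suc KK) + CU"
definition "Phi j = (n + 1 - j) * CB + (n - k - ((j - 1) - W (j - 1))) * CZ + 2"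

lemma regs_frame: "regs s j \<Longrightarrow> (\<forall>x. x \<in> {1,2,3,4,5,6,7,9,10} \<longrightarrow> s' x = s x) \<Longrightarrow> regs s' j"
  unfolding regs_def by simp

lemma ac_inp: "s a \<le> n \<Longrightarrow> s b \<le> n \<Longrightarrow> acost q (Inp a b) s \<le> KK"
  using ql_small[of "s a"] ql_small[of "s b"] ZLfacts unfolding KK_def by auto

lemma ac_reg: "s a \<le> n \<Longrightarrow> acost q (Reg a) s \<le> KK"
  using ql_small[of "s a"] KK1 by auto

lemma body_step:
  assumes mi: "minv s j"
  shows "\<exists>s3. runs q inp BODY s s3 (CB - 2 + (1 - V j) * CZ) \<and> s3 0 = (\<Sum>i=1..j. trm i) \<and>
     (if j < n \<and> (V j = 1 \<or> k - W (j - 1) < n - j) then regs s3 (Suc j) \<and> s3 8 = 1 else s3 8 = 0 \<and> s3 9 = 0)"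
proof -
  have r: "regs s j" and s8: "s 8 = 1" and s0: "s 0 = (\<Sum>i=1..j-1. trm i)" using mi unfolding minv_def by auto
  have R: "s 9 = 0" "s 3 = n + 1 - j" "1 \<le> j" "j \<le> n" using r unfolding regs_def by auto
  define s1 where "s1 = s(18 := V j)"
  have a1: "runs q inp (Assign 18 (Inp 9 3)) s s1 (Suc KK)"
    unfolding s1_def
    by (rule runs_assign', rule ac_inp) (use R in \<open>auto simp: V_def\<close>)
  have r1: "regs s1 j" using r unfolding s1_def by (rule regs_frame) auto
  obtain s2 where s2: "runs q inp TRM s1 s2 (KK + 5 * Suc KK + (1 - V j) * CZ)" "s2 0 = (\<Sum>i=1..j. trm i)"
    "\<forall>x. x \<notin> {0,19,20,21} \<longrightarrow> s2 x = s1 x"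
    using trm_run[OF r1] s0 unfolding s1_def by auto
  have r2: "regs s2 j" using r1 by (rule regs_frame) (use s2(3) in auto)
  have s2v: "s2 18 = V j" "s2 8 = 1" using s2(3) s8 unfolding s1_def by auto
  have CBe: "CB - 2 + (1 - V j) * CZ = Suc KK + ((KK + 5 * Suc KK + (1 - V j) * CZ) + CU)"
    unfolding CB_def by simp
  show ?thesis
  proof (cases "j < n \<and> (V j = 1 \<or> k - W (j - 1) < n - j)")
    case True
    obtain s3 where s3: "runs q inp UPD s2 s3 CU" "regs s3 (Suc j)" "s3 0 = s2 0" "s3 8 = s2 8"
      using upd_cont[OF r2 s2v(1)] True by blast
    have "runs q inp BODY s s3 (CB - 2 + (1 - V j) * CZ)"
      unfolding BODY_def CBe by (rule runs_seq[OF a1 runs_seq[OF s2(1) s3(1)]])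
    then show ?thesis using s3 s2 s2v True by auto
  next
    case False
    then have c: "j = n \<or> (V j = 0 \<and> k - W (j - 1) = n - j)"
      using R V_le[of j] r unfolding regs_def by auto
    obtain s3 where s3: "runs q inp UPD s2 s3 CU" "s3 0 = s2 0" "s3 8 = 0" "s3 9 = s2 9"
      using upd_stop[OF r2 s2v(1) c] by blast
    have "s2 9 = 0" using s2(3) R unfolding s1_def by auto
    have "runs q inp BODY s s3 (CB - 2 + (1 - V j) * CZ)"
      unfolding BODY_def CBe by (rule runs_seq[OF a1 runs_seq[OF s2(1) s3(1)]])
    then show ?thesis using s3 s2 False \<open>s2 9 = 0\<close> by auto
  qed
qed

lemma sum_full:
  assumes "1 \<le> j" "j \<le> n" "\<not> (j < n \<and> (V j = 1 \<or> k - W (j - 1) < n - j))" "regs s j"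
  shows "(\<Sum>i=1..j. trm i) = (\<Sum>i=1..n. trm i)"
proof (cases "j = n")
  case True then show ?thesis by simp
next
  case False
  then have c: "j < n" "V j = 0" "k - W (j - 1) = n - j"
    using assms V_le[of j] unfolding regs_def by auto
  show ?thesis
    by (rule sum.mono_neutral_right[symmetric]) (use assms c tail_zero in auto)
qed

lemma mloop: "\<forall>s j. n - j = d \<longrightarrow> minv s j \<longrightarrow> (\<exists>s'. runs q inp MLOOP s s' (Phi j) \<and> s' 0 = (\<Sum>i=1..n. trm i))"
proof (induction d rule: less_induct)
  case (less d)
  show ?case
  proof (intro allI impI)
    fix s j assume d: "n - j = d" and mi: "minv s j"
    have r: "regs s j" and s8: "s 8 = 1" using mi unfolding minv_def by auto
    have R: "s 9 = 0" "1 \<le> j" "j \<le> n" using r unfolding regs_def by auto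
    have zc: "(j - 1) - W (j - 1) < n - k" by (rule zcount[OF r])
    have c1: "cmpcost q 9 8 s \<le> 2" unfolding cmpcost_def using R s8 qlen0 qlen1 by simp
    obtain s3 where s3: "runs q inp BODY s s3 (CB - 2 + (1 - V j) * CZ)" "s3 0 = (\<Sum>i=1..j. trm i)"
      "if j < n \<and> (V j = 1 \<or> k - W (j - 1) < n - j) then regs s3 (Suc j) \<and> s3 8 = 1 else s3 8 = 0 \<and> s3 9 = 0"
      using body_step[OF mi] by blast
    have CB2: "2 \<le> CB" unfolding CB_def by simp
    show "\<exists>s'. runs q inp MLOOP s s' (Phi j) \<and> s' 0 = (\<Sum>i=1..n. trm i)"
    proof (cases "j < n \<and> (V j = 1 \<or> k - W (j - 1) < n - j)")
      case True
      then have r3: "regs s3 (Suc j)" "s3 8 = 1" using s3(3) by auto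
      have mi3: "minv s3 (Suc j)" unfolding minv_def using r3 s3(2) by simp
      have lt: "n - Suc j < d" using True d by auto
      obtain s' where s': "runs q inp MLOOP s3 s' (Phi (Suc j))" "s' 0 = (\<Sum>i=1..n. trm i)"
        using less[OF lt, rule_format, of "Suc j" s3] mi3 by auto
      have R0: "runs q inp MLOOP s s' (2 + (CB - 2 + (1 - V j) * CZ) + Phi (Suc j))"
        unfolding MLOOP_def by (rule runs_whileT[OF _ c1 s3(1)[unfolded MLOOP_def] s'(1)[unfolded MLOOP_def]]) (use R s8 in simp)
      have zc3: "j - W j < n - k" using zcount[OF r3(1)] by simp
      have wj: "W j = W (j - 1) + V j" using W_Suc[of "j - 1"] R by simp
      have w1: "W (j - 1) \<le> j - 1" by (rule W_le)
      have e1: "n - k - ((j - 1) - W (j - 1)) = (n - k - (j - W j)) + (1 - V j)"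
        using zc3 wj w1 V_le[of j] R by linarith
      have e2: "n + 1 - j = Suc (n + 1 - Suc j)" using True by (simp add: Suc_diff_le)
      have "2 + (CB - 2 + (1 - V j) * CZ) + Phi (Suc j) = Phi j"
        unfolding Phi_def e1 e2 using CB2 by (simp add: algebra_simps)
      then show ?thesis using R0 s' by auto
    next
      case False
      have s38: "s3 8 = 0" "s3 9 = 0" using s3(3) False by auto
      have c2: "cmpcost q 9 8 s3 \<le> 2" unfolding cmpcost_def using s38 qlen0 by simp
      have R0: "runs q inp MLOOP s s3 (2 + (CB - 2 + (1 - V j) * CZ) + 2)"
        unfolding MLOOP_def by (rule runs_whileT[OF _ c1 s3(1)[unfolded MLOOP_def] runs_whileF]) (use R s8 s38 c2 in simp_all)
      have "2 + (CB - 2 + (1 - V j) * CZ) + 2 \<le> Phi j"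
      proof -
        have "1 \<le> n + 1 - j" using R by simp
        then have a: "CB \<le> (n + 1 - j) * CB" by simp
        have "1 - V j \<le> n - k - ((j - 1) - W (j - 1))" using zc by simp
        then have b: "(1 - V j) * CZ \<le> (n - k - ((j - 1) - W (j - 1))) * CZ" by (rule mult_le_mono1)
        show ?thesis unfolding Phi_def using a b CB2 by linarith
      qed
      moreover have "s3 0 = (\<Sum>i=1..n. trm i)" using s3(2) sum_full[OF R(2) R(3) False r] by simp
      ultimately show ?thesis using R0 runs_mono by blast
    qed
  qed
qed

definition "TM = 5 * Suc KK + ((k - 0) * (9 * KK + 8) + KK) + 5 * Suc KK + Phi 1"

lemma main_run: "\<exists>s'. runs q inp MAIN (init n k) s' TM \<and> s' 0 = (\<Sum>i=1..n. trm i)"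
proof -
  define s0 where "s0 = init n k"
  have i0: "s0 1 = n" "s0 (Suc 0) = n" "s0 2 = k" "s0 0 = 0" "s0 9 = 0" unfolding s0_def init_def by auto
  have kZ: "n < q ^ Z" "k < q ^ Z" "n - k < q ^ Z" "1 < q ^ Z" "Suc 0 < q ^ Z" "0 \<le> n" "1 \<le> n" "Suc 0 \<le> n" "k \<le> n"
    using smallZ kn n1 by auto
  define s1 where "s1 = s0(10 := 1, 6 := 1, 11 := n - k, 11 := n - k - 1, 12 := 0)"
  have a0e: "n - k - 1 = a0" "n - Suc k = a0" unfolding a0_def by simp_all
  obtain s2 where s2: "runs q inp SLOOP s1 s2 ((k - 0) * (9 * KK + 8) + KK)" "s2 6 = gb q (a0 + k) k"
    "\<forall>x. x \<notin> {6,12,13,14,15} \<longrightarrow> s2 x = s1 x"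
  proof -
    have "\<exists>s'. runs q inp SLOOP s1 s' ((k - 0) * (9 * KK + 8) + KK) \<and> s' 6 = gb q (a0 + k) k \<and>
        (\<forall>x. x \<notin> {6,12,13,14,15} \<longrightarrow> s' x = s1 x)"
      by (rule sloop) (simp_all add: s1_def i0 a0e)
    then show ?thesis using that by blast
  qed
  have hsetup: "runs q inp SETUP s0 s2 (5 * Suc KK + ((k - 0) * (9 * KK + 8) + KK))"
    unfolding SETUP_def
    apply (rule runs_mono)
     apply (rule runs_seq_assign[where K = KK])
      subgoal by (rule ac; simp add: i0 kZ)
     apply (rule runs_seq_assign[where K = KK])
      subgoal by (rule ac; simp add: i0 kZ)
     apply (rule runs_seq_assign[where K = KK])
      subgoal by (rule ac; simp add: i0 kZ)
     apply (rule runs_seq_assign[where K = KK])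
      subgoal by (rule ac; simp add: i0 kZ)
     apply (rule runs_seq_assign[where K = KK])
      subgoal by (rule ac; simp add: i0 kZ)
     apply (rule subst[of s1 _ "\<lambda>s. runs q inp SLOOP s s2 ((k - 0) * (9 * KK + 8) + KK)"])
      apply (simp add: s1_def i0 fun_eq_iff)
     apply (rule s2(1))
    apply simp
    done
  have v2: "s2 0 = 0" "s2 (Suc 0) = n" "s2 1 = n" "s2 2 = k" "s2 9 = 0" "s2 10 = 1" using s2(3) i0 unfolding s1_def by auto
  define s3 where "s3 = s2(3 := n, 4 := n - 1, 5 := k, 7 := 0, 8 := 1)"
  have init2: "runs q inp INIT2 s2 s3 (5 * Suc KK)"
    unfolding INIT2_def s3_def
    apply (rule runs_mono)
     apply (rule runs_seq_assign[where K = KK])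
      subgoal by (rule ac_reg) (simp add: v2)
     apply (rule runs_seq_assign[where K = KK])
      subgoal by (rule ac; simp add: v2 kZ)
     apply (rule runs_seq_assign[where K = KK])
      subgoal by (rule ac_reg) (simp add: v2 kZ)
     apply (rule runs_seq_assign[where K = KK])
      subgoal by (rule ac; simp add: v2 kZ)
     apply (rule runs_assign'[where K = KK])
      subgoal by (rule ac; simp add: v2 kZ)
     apply (simp add: v2)
    apply simp
    done
  have mi: "minv s3 1"
    unfolding minv_def regs_def s3_def using v2 s2(2) a0n kn by (simp add: a0e[symmetric])
  obtain s' where s': "runs q inp MLOOP s3 s' (Phi 1)" "s' 0 = (\<Sum>i=1..n. trm i)"
    using mloop mi by blast
  have "runs q inp MAIN s0 s' TM"
    unfolding MAIN_def TM_def by (rule runs_mono[OF runs_seq[OF hsetup runs_seq[OF init2 s'(1)]]]) simp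
  then show ?thesis using s' unfolding s0_def by auto
qed

end

context L begin

lemma lin: "(a::nat) \<le> 116 * N \<Longrightarrow> b \<le> 270 * N \<Longrightarrow> c \<le> 24 * N \<Longrightarrow> K = 12 * Y \<Longrightarrow> Y \<le> N \<Longrightarrow> n \<le> N \<Longrightarrow> 1 \<le> Y \<Longrightarrow>
   10 * Suc K + K + a + b + c + 2 + 2 * (n + 1) \<le> 1000 * N"
  by (simp; linarith)

lemma TM_bound: "TM + 2 * (n + 1) \<le> 1000 * (n * k * (n - k) * lg n * lg (lg n))"
proof -
  define Y where "Y = k * (n - k) * LL"
  have A1: "1 \<le> k * (n - k)" using kd by simp
  have Y1: "1 \<le> Y" unfolding Y_def using mult_le_mono[OF A1 LL1] by simp
  have AY: "k * (n - k) \<le> Y" unfolding Y_def using LL1 by simp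
  have KKe: "KK = 12 * Y" unfolding KK_def ZL_def Z_def Y_def by simp
  have nY: "Y \<le> n * Y" "n \<le> n * Y" using n1 Y1 by simp_all
  have b1: "k * (9 * KK + 8) \<le> 116 * (n * Y)"
  proof -
    have "k * (9 * KK + 8) \<le> n * (9 * KK + 8)" using kn by (intro mult_le_mono1) simp
    also have "\<dots> \<le> n * (116 * Y)" using KKe Y1 by (intro mult_le_mono2) simp
    finally show ?thesis by simp
  qed
  have CBb: "CB \<le> 270 * Y" unfolding CB_def CU_def using KKe Y1 by simp
  have b2: "n * CB \<le> 270 * (n * Y)" using mult_le_mono2[OF CBb, of n] by simp
  have CZb: "CZ \<le> 24 * (n * k)" unfolding CZ_def using n1 k0 kn
  proof -
    have "13 * k \<le> 13 * (n * k)" using n1 by simp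
    moreover have "n + 1 \<le> 2 * (n * k)"
    proof -
      have "n \<le> n * k" using k0 by simp
      moreover have "1 \<le> n * k" using n1 k0 by simp
      ultimately show ?thesis by linarith
    qed
    moreover have "k * (9 * n + 13) = 9 * (n * k) + 13 * k" by (simp add: algebra_simps)
    ultimately show "k * (9 * n + 13) + (n + 1) \<le> 24 * (n * k)" by linarith
  qed
  have b3: "(n - k) * CZ \<le> 24 * (n * Y)"
  proof -
    have "(n - k) * CZ \<le> (n - k) * (24 * (n * k))" using CZb by (rule mult_le_mono2)
    also have "\<dots> = 24 * (n * (k * (n - k)))" by (simp add: algebra_simps)
    also have "\<dots> \<le> 24 * (n * Y)" using AY by simp
    finally show ?thesis .
  qed
  have TMe: "TM = 10 * Suc KK + KK + k * (9 * KK + 8) + n * CB + (n - k) * CZ + 2"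
    unfolding TM_def Phi_def by simp
  have "TM + 2 * (n + 1) \<le> 1000 * (n * Y)"
    unfolding TMe by (rule lin[OF b1 b2 b3 KKe nY Y1])
  moreover have "n * Y = n * k * (n - k) * lg n * lg (lg n)" unfolding Y_def LL_def by (simp add: mult.assoc)
  ultimately show ?thesis by simp
qed

lemma prog_run: "\<exists>s t. big q inp PROG (init n k) t s \<and> s 0 = (\<Sum>i=1..n. trm i) \<and>
   t \<le> 1000 * (n * k * (n - k) * lg n * lg (lg n) + n + 1)"
proof -
  obtain s' where s': "runs q inp MAIN (init n k) s' TM" "s' 0 = (\<Sum>i=1..n. trm i)" using main_run by blast
  have i: "init n k 9 = 0" "init n k 2 = k" "init n k 1 = n" unfolding init_def by auto
  have c1: "cmpcost q 9 2 (init n k) \<le> n + 1" "cmpcost q 2 1 (init n k) \<le> n + 1"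
    unfolding cmpcost_def using i ql_small[of 0] ql_small[of k] ql_small[of n] kn by auto
  have "runs q inp PROG (init n k) s' ((n + 1) + ((n + 1) + TM))"
    unfolding PROG_def
    by (rule runs_ifT[OF _ c1(1) runs_ifT[OF _ c1(2) s'(1)]]) (use i k0 kn in simp_all)
  then have "runs q inp PROG (init n k) s' (1000 * (n * k * (n - k) * lg n * lg (lg n) + n + 1))"
    by (rule runs_mono) (use TM_bound in simp)
  then show ?thesis using s' unfolding runs_def by blast
qed

lemma I_EXT_eq:
  fixes \<phi> :: "'a::{finite,field} \<Rightarrow> nat" and X
  assumes inp: "inp = EXT \<phi> n k X" and qc: "q = card (UNIV :: 'a set)"
  shows "I_EXT \<phi> n k X = (\<Sum>j=1..n. trm j)"
proof -
  have pj: "1 \<le> n + 1 - j" "n + 1 - j \<le> n" "n + 1 - (n + 1 - j) = j"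
    "Suc 0 \<le> Suc n - j" "Suc n - j \<le> n" "Suc n - (Suc n - j) = j" if "1 \<le> j" "j \<le> n" for j
    using that by auto
  have vv: "vv n k X j = V j" if "1 \<le> j" "j \<le> n" for j
    unfolding V_def using pj[OF that] by (simp add: inp EXT_def)
  have ww: "ww n k X (j - 1) = W (j - 1)" if "1 \<le> j" "j \<le> n" for j
    unfolding ww_def W_def using that by (intro sum.cong) (auto intro!: vv)
  have ww': "ww n k X (j - Suc 0) = W (j - Suc 0)" if "1 \<le> j" "j \<le> n" for j
    using ww[OF that] by simp
  have cv: "colval \<phi> n k X j = col j" if "1 \<le> j" "j \<le> n" for j
    unfolding colval_def col_def hor_def qc[symmetric] using pj[OF that]
    by (intro sum.cong) (auto simp: inp EXT_def)
  show ?thesis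
    unfolding I_EXT_def qc[symmetric] trm_def
    by (rule sum.cong) (auto simp: vv ww ww' cv gbinom_gb[OF q2])
qed

end

lemma card_field_ge2: "2 \<le> card (UNIV :: 'a::{finite,field} set)"
proof -
  have "{0, 1} \<subseteq> (UNIV :: 'a set)" by simp
  then have "card {0, 1::'a} \<le> card (UNIV :: 'a set)" by (intro card_mono) auto
  then show ?thesis by simp
qed

lemma edge_run:
  assumes q: "2 \<le> q" and k: "k = 0 \<or> k = n"
  shows "\<exists>s t. big q inp PROG (init n k) t s \<and> s 0 = 0 \<and> t \<le> 1000 * (n * k * (n - k) * lg n * lg (lg n) + n + 1)"
proof -
  have i: "init n k 9 = 0" "init n k 2 = k" "init n k 1 = n" "init n k 0 = 0" unfolding init_def by auto
  have ql: "qlen q x \<le> x + 1" for x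
    unfolding qlen_def using floorlog_leI[of x q x] nat_lt_pow[OF q, of x] q by auto
  have c: "cmpcost q a b (init n k) \<le> 2 * n + 2" if "init n k a \<le> n" "init n k b \<le> n" for a b
    unfolding cmpcost_def using ql[of "init n k a"] ql[of "init n k b"] that by auto
  show ?thesis
  proof (cases "k = 0")
    case True
    have "runs q inp PROG (init n k) (init n k) ((2 * n + 2) + 1)"
      unfolding PROG_def by (rule runs_ifF[OF _ c runs_skip]) (use i True in simp_all)
    then show ?thesis unfolding runs_def using i by fastforce
  next
    case False
    then have kn: "k = n" "0 < n" using k by auto
    have "runs q inp PROG (init n k) (init n k) ((2 * n + 2) + ((2 * n + 2) + 1))"
      unfolding PROG_def by (rule runs_ifT[OF _ c runs_ifF[OF _ c runs_skip]]) (use i kn in simp_all)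
    then show ?thesis unfolding runs_def using i by fastforce
  qed
qed

lemma vv_le: "vv n k X j \<le> 1" unfolding vv_def by simp

lemma ww_le: "ww n k X j \<le> j"
proof -
  have "ww n k X j \<le> (\<Sum>l=1..j. (1::nat))" unfolding ww_def by (rule sum_mono) (rule vv_le)
  then show ?thesis by simp
qed

lemma I_EXT_edge:
  fixes \<phi> :: "'a::{finite,field} \<Rightarrow> nat"
  assumes "k = 0 \<or> k = n"
  shows "I_EXT \<phi> n k X = 0"
proof (cases "k = 0")
  case True
  have "vv n k X j = 0" for j unfolding vv_def using True by simp
  moreover have "colval \<phi> n k X j = 0" for j unfolding colval_def using True by simp
  ultimately show ?thesis unfolding I_EXT_def by simp
next
  case False
  then have k: "k = n" using assms by simp
  have "gbinom (card (UNIV :: 'a set)) (n - j) (k - ww n k X (j - 1)) = 0" if "j \<in> {1..n}" for j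
  proof -
    have "ww n k X (j - 1) \<le> j - 1" by (rule ww_le)
    then have "n - j < k - ww n k X (j - 1)" using that k by auto
    then show ?thesis unfolding gbinom_def by simp
  qed
  then show ?thesis unfolding I_EXT_def by (intro sum.neutral) simp
qed

theorem theorem5:
  fixes \<phi> :: "'a::{finite,field} \<Rightarrow> nat"
  assumes "bij_betw \<phi> UNIV {0..<card (UNIV :: 'a set)}"
    and "\<phi> 0 = 0"
  shows "\<exists>(P::com) (C::nat). \<forall>n k (X :: (nat \<Rightarrow> 'a) set).
           k \<le> n \<longrightarrow> X \<in> grass n k \<longrightarrow>
           (\<exists>s t. big (card (UNIV :: 'a set)) (EXT \<phi> n k X) P (init n k) t s
                  \<and> s 0 = I_EXT \<phi> n k X
                  \<and> t \<le> C * (n * k * (n - k) * lg n * lg (lg n) + n + 1))"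
proof (intro exI[of _ PROG] exI[of _ 1000] allI impI)
  fix n k :: nat and X :: "(nat \<Rightarrow> 'a) set"
  assume kn: "k \<le> n" and "X \<in> grass n k"
  define q where "q = card (UNIV :: 'a set)"
  have q2: "2 \<le> q" unfolding q_def by (rule card_field_ge2)
  have phi: "\<phi> x < q" for x using assms(1) unfolding q_def bij_betw_def by auto
  show "\<exists>s t. big (card (UNIV :: 'a set)) (EXT \<phi> n k X) PROG (init n k) t s
                  \<and> s 0 = I_EXT \<phi> n k X
                  \<and> t \<le> 1000 * (n * k * (n - k) * lg n * lg (lg n) + n + 1)"
  proof (cases "k = 0 \<or> k = n")
    case True
    show ?thesis using edge_run[OF q2 True, of "EXT \<phi> n k X"] I_EXT_edge[OF True, of \<phi> X]
      unfolding q_def by simp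
  next
    case False
    then have k0: "0 < k" "k < n" using kn by auto
    interpret L q "EXT \<phi> n k X" n k
    proof
      show "2 \<le> q" by (rule q2)
      show "0 < k" "k < n" by (rule k0)+
      show "EXT \<phi> n k X 0 p \<le> 1" for p unfolding EXT_def using vv_le[of n k X "n + 1 - p"] by auto
      have "vv n k X i < q" for i using vv_le[of n k X i] q2 by linarith
      then show "EXT \<phi> n k X t p < q" for t p unfolding EXT_def using phi q2 by auto
    qed
    obtain s t where st: "big q (EXT \<phi> n k X) PROG (init n k) t s" "s 0 = (\<Sum>i=1..n. trm i)"
      "t \<le> 1000 * (n * k * (n - k) * lg n * lg (lg n) + n + 1)"
      using prog_run by blast
    have "I_EXT \<phi> n k X = (\<Sum>j=1..n. trm j)" by (rule I_EXT_eq) (simp_all add: q_def)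
    then show ?thesis using st unfolding q_def by auto
  qed
qed

end
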